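(* Let $\pi$ be the policy induced by Dual Gradient Descent with Proxy Assignments with stepsize $\eta=\Theta(\sqrt{K/T})$. Then for every $k\in[K]$, $\mathbb E\big[\widetilde{\textsc{Reg}}_k[\omega_k]\big]=O(\sqrt{T/K})$.
   Context: Model. There are $m$ resources and $n$ arrival types; type $j$ has cost vector $c_j\in\mathbb R^m$ and allowed resources $\mathcal S_j\subseteq[m]$, $\max_{i,j}|c_{ji}|<\infty$. The horizon has $T$ periods partitioned into $K=\Theta(1)$ epochs ($T$ a multiple of $K$), epoch $k$ being $\mathcal T_k=\{(k-1)T/K+1,\dots,kT/K\}$. In period $t$ one arrival of type $j^t$ occurs, $j^1,\dots,j^T$ i.i.d. with $\mathbb P(j^t=j)=p_j$, $p$ not depending on $T$ and unknown to the decision-maker; $\omega_k=(j^t)_{t\in\mathcal T_k}$, $\Lambda_j(t_1:t_2)=\sum_{t_1<\tau\le t_2}\mathbf 1\{j^\tau=j\}$. Feasible decisions: $\mathcal X^t=\{x\in\{0,1\}^m:\sum_ix_i\le1,\ x_i=0\ \forall i\notin\mathcal S_{j^t}\}$. $Z^\pi_{ji}(t)$ counts type-$j$ arrivals assigned to $i$ in periods $1..t$. Each epoch $k$ and resource $i$ has a target $\rho_{ki}\in[0,1]$ and convex $L$-Lipschitz $g_{ki}:[0,1]\to\mathbb R_{\ge0}$ with $g_{ki}(\rho_{ki})=0$. Expectations over arrivals and algorithm decisions; $O(\cdot)$ as $T\to\infty$. Dual Gradient Descent with Proxy Assignments (stepsize $\eta$, initial $\mu^1\in\mathbb R^{K\times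 m}$): for $t=1,\dots,T$, with $k$ the epoch of $t$: if $t=(k-1)T/K+1$ set $\mu^t_{k'}=\mu^1_{k'}$ for $k'\ge k$; observe $j=j^t$; for every $k'\ge k$ compute $\tilde x^t_{k'}\in\arg\min_{x\in\mathcal X^t}\sum_ix_i(c_{ji}-\mu^t_{k'i})$; implement $x^t=\tilde x^t_k$; compute $a^t\in\arg\min_{a\in[0,1]^{(K+1-k)\times m}}\sum_{k'\ge k}k'\sum_ig_{k'i}\big(\frac{\sum_{t'\le(k-1)T/K}x^{t'}_i}{k'T/K}+\sum_{k''=k}^{k'}\frac{a_{k''i}}{k'}\big)+\sum_{k'\ge k}\sum_i\mu^t_{k'i}a_{k'i}$; update $\mu^{t+1}_{k'}=\mu^t_{k'}+\eta(a^t_{k'}-\tilde x^t_{k'})$ for $k'\ge k$. Proxy quantities. For $k\le k_1\le k_2\le K$: $\widetilde Z^\pi_{ji,k}\big(\frac{(k_1-1)T}K:\frac{k_2T}K\big)=\sum_{t\in\mathcal T_k}\sum_{k''=k_1}^{k_2}\tilde x^t_{k''i}\mathbf 1\{j^t=j\}$, $\widetilde Z^\pi_{i,k}=\sum_j\widetilde Z^\pi_{ji,k}$. Cumulative proxy cost: $\widetilde V^\pi_k[\omega_k\mid z]=\sum_{j,i}c_{ji}\widetilde Z^\pi_{ji,k}\big(\frac{(k-1)T}K:T\big)+\frac TK\sum_{k'\ge k}\sum_ik'g_{k'i}\Big(\frac{z_i+\widetilde Z^\pi_{i,k}((k-1)T/K:k'T/K)}{k'T/K}\Big)$. Proxy offline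 optimum $\widetilde V^{\textsc{off}}_k[\omega_k\mid z]$: the minimum over nonnegative integers $Z^{(k')}_{ji}$ ($k'\ge k$), zero for $i\notin\mathcal S_j$, with $\sum_iZ^{(k')}_{ji}\le\Lambda_j\big(\frac{(k-1)T}K:\frac{kT}K\big)$ for all $j,k'\ge k$, of $\sum_{j,i}c_{ji}\sum_{k'\ge k}Z^{(k')}_{ji}+\frac TK\sum_{k'\ge k}\sum_ik'g_{k'i}\Big(\frac{z_i+\sum_j\sum_{k''=k}^{k'}Z^{(k'')}_{ji}}{k'T/K}\Big)$. Proxy regret: $\widetilde{\textsc{Reg}}_k[\omega_k]=\widetilde V^\pi_k[\omega_k\mid Z^\pi((k-1)T/K)]-\widetilde V^{\textsc{off}}_k[\omega_k\mid Z^\pi((k-1)T/K)]$ (with $Z^\pi(0)=0$). *)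

theory Defs
  imports "HOL-Analysis.Analysis" "HOL-Probability.Probability"
begin

(* Epochs are indexed 1..K, periods 1..T, resources 0..m-1, arrival types 0..n-1.
   A realisation of the arrivals is a function J :: nat => nat with J t = j^t. *)

definition epoch_of :: "nat \<Rightarrow> nat \<Rightarrow> nat \<Rightarrow> nat" where
  "epoch_of K T t = (t - 1) div (T div K) + 1"

definition epoch_periods :: "nat \<Rightarrow> nat \<Rightarrow> nat \<Rightarrow> nat set" where
  "epoch_periods K T k = {(k - 1) * (T div K) + 1 .. k * (T div K)}"

definition feasX :: "nat \<Rightarrow> (nat \<Rightarrow> nat set) \<Rightarrow> nat \<Rightarrow> (nat \<Rightarrow> real) set" where
  "feasX m S j = {x. (\<forall>i. x i = 0 \<or> x i = 1) \<and> (\<Sum>i<m. x i) \<le> 1 \<and> (\<forall>i. i \<notin> S j \<longrightarrow> x i = 0)}"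

(* the box [0,1]^{epochs x resources} over which a^t is chosen *)
definition unit_box :: "(nat \<Rightarrow> nat \<Rightarrow> real) set" where
  "unit_box = {a. \<forall>k i. 0 \<le> a k i \<and> a k i \<le> 1}"

(* objective minimised by a^t in epoch k; U0 i = sum of x^{t'}_i over t' <= (k-1)T/K *)
definition a_objective ::
  "nat \<Rightarrow> nat \<Rightarrow> nat \<Rightarrow> (nat \<Rightarrow> nat \<Rightarrow> real \<Rightarrow> real) \<Rightarrow> nat \<Rightarrow> (nat \<Rightarrow> real)
   \<Rightarrow> (nat \<Rightarrow> nat \<Rightarrow> real) \<Rightarrow> (nat \<Rightarrow> nat \<Rightarrow> real) \<Rightarrow> real" where
  "a_objective m K T g k U0 mu a =
     (\<Sum>k'=k..K. real k' * (\<Sum>i<m. g k' i (U0 i / (real k' * real T / real K)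
                                             + (\<Sum>k''=k..k'. a k'' i) / real k')))
     + (\<Sum>k'=k..K. \<Sum>i<m. mu k' i * a k' i)"

(* Tie-breaking rules: selX t h k' j r must be a minimiser of sum_i x_i r_i over X^t,
   selA t h F a minimiser of F over the box (whenever one exists).  Both may depend on the
   period t and on the history h = [j^1,...,j^t] (non-anticipating). *)
definition valid_selectors ::
  "nat \<Rightarrow> nat \<Rightarrow> (nat \<Rightarrow> nat set)
   \<Rightarrow> (nat \<Rightarrow> nat list \<Rightarrow> nat \<Rightarrow> nat \<Rightarrow> (nat \<Rightarrow> real) \<Rightarrow> (nat \<Rightarrow> real))
   \<Rightarrow> (nat \<Rightarrow> nat list \<Rightarrow> ((nat \<Rightarrow> nat \<Rightarrow> real) \<Rightarrow> real) \<Rightarrow> (nat \<Rightarrow> nat \<Rightarrow> real)) \<Rightarrow> bool" where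
  "valid_selectors m n S selX selA \<longleftrightarrow>
     (\<forall>t h k' j r. j < n \<longrightarrow>
        selX t h k' j r \<in> feasX m S j \<and>
        (\<forall>x\<in>feasX m S j. (\<Sum>i<m. selX t h k' j r i * r i) \<le> (\<Sum>i<m. x i * r i))) \<and>
     (\<forall>t h F. (\<exists>a\<in>unit_box. \<forall>b\<in>unit_box. F a \<le> F b) \<longrightarrow>
        selA t h F \<in> unit_box \<and> (\<forall>b\<in>unit_box. F (selA t h F) \<le> F b))"

(* Data computed in period tau from the state after period tau-1.
   State s = (mu, U, U0): dual variables after the last update, cumulative implemented usage,
   usage at the start of the current epoch.
   Result: (mu^tau after possible reset, U0, proxy decisions xt k', a^tau). *)
definition step_data ::
  "nat \<Rightarrow> nat \<Rightarrow> nat \<Rightarrow> (nat \<Rightarrow> nat \<Rightarrow> real) \<Rightarrow> (nat \<Rightarrow> nat \<Rightarrow> real \<Rightarrow> real)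
   \<Rightarrow> (nat \<Rightarrow> nat \<Rightarrow> real)
   \<Rightarrow> (nat \<Rightarrow> nat list \<Rightarrow> nat \<Rightarrow> nat \<Rightarrow> (nat \<Rightarrow> real) \<Rightarrow> (nat \<Rightarrow> real))
   \<Rightarrow> (nat \<Rightarrow> nat list \<Rightarrow> ((nat \<Rightarrow> nat \<Rightarrow> real) \<Rightarrow> real) \<Rightarrow> (nat \<Rightarrow> nat \<Rightarrow> real))
   \<Rightarrow> (nat \<Rightarrow> nat) \<Rightarrow> nat
   \<Rightarrow> (nat \<Rightarrow> nat \<Rightarrow> real) \<times> (nat \<Rightarrow> real) \<times> (nat \<Rightarrow> real)
   \<Rightarrow> (nat \<Rightarrow> nat \<Rightarrow> real) \<times> (nat \<Rightarrow> real) \<times> (nat \<Rightarrow> nat \<Rightarrow> real) \<times> (nat \<Rightarrow> nat \<Rightarrow> real)" where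
  "step_data m K T c g mu1 selX selA J tau s =
     (let (mu, U, U0) = s;
          k = epoch_of K T tau;
          start = (tau = (k - 1) * (T div K) + 1);
          mu' = (if start then (\<lambda>k' i. if k \<le> k' then mu1 k' i else mu k' i) else mu);
          U0' = (if start then U else U0);
          h = map J [1..<tau + 1];
          xt = (\<lambda>k'. selX tau h k' (J tau) (\<lambda>i. c (J tau) i - mu' k' i));
          a = selA tau h (a_objective m K T g k U0' mu')
      in (mu', U0', xt, a))"

fun dgd_state ::
  "nat \<Rightarrow> nat \<Rightarrow> nat \<Rightarrow> (nat \<Rightarrow> nat \<Rightarrow> real) \<Rightarrow> (nat \<Rightarrow> nat \<Rightarrow> real \<Rightarrow> real)
   \<Rightarrow> (nat \<Rightarrow> nat \<Rightarrow> real) \<Rightarrow> real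
   \<Rightarrow> (nat \<Rightarrow> nat list \<Rightarrow> nat \<Rightarrow> nat \<Rightarrow> (nat \<Rightarrow> real) \<Rightarrow> (nat \<Rightarrow> real))
   \<Rightarrow> (nat \<Rightarrow> nat list \<Rightarrow> ((nat \<Rightarrow> nat \<Rightarrow> real) \<Rightarrow> real) \<Rightarrow> (nat \<Rightarrow> nat \<Rightarrow> real))
   \<Rightarrow> (nat \<Rightarrow> nat) \<Rightarrow> nat
   \<Rightarrow> (nat \<Rightarrow> nat \<Rightarrow> real) \<times> (nat \<Rightarrow> real) \<times> (nat \<Rightarrow> real)" where
  "dgd_state m K T c g mu1 eta selX selA J 0 = (mu1, (\<lambda>i. 0), (\<lambda>i. 0))"
| "dgd_state m K T c g mu1 eta selX selA J (Suc t) =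
     (let (mu', U0', xt, a) = step_data m K T c g mu1 selX selA J (Suc t)
                                 (dgd_state m K T c g mu1 eta selX selA J t);
          k = epoch_of K T (Suc t);
          U = fst (snd (dgd_state m K T c g mu1 eta selX selA J t));
          mu'' = (\<lambda>k' i. if k \<le> k' then mu' k' i + eta * (a k' i - xt k' i) else mu' k' i)
      in (mu'', (\<lambda>i. U i + xt k i), U0'))"

definition proxy_x where
  "proxy_x m K T c g mu1 eta selX selA J t k' =
     fst (snd (snd (step_data m K T c g mu1 selX selA J t
                     (dgd_state m K T c g mu1 eta selX selA J (t - 1))))) k'"

definition impl_x where
  "impl_x m K T c g mu1 eta selX selA J t = proxy_x m K T c g mu1 eta selX selA J t (epoch_of K T t)"

definition usage where
  "usage m K T c g mu1 eta selX selA J t i = (\<Sum>t'=1..t. impl_x m K T c g mu1 eta selX selA J t' i)"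

definition proxy_Z where
  "proxy_Z m K T c g mu1 eta selX selA J k k1 k2 j i =
     (\<Sum>t\<in>epoch_periods K T k. \<Sum>k''=k1..k2.
        (if J t = j then proxy_x m K T c g mu1 eta selX selA J t k'' i else 0))"

definition proxy_V where
  "proxy_V m n K T c g mu1 eta selX selA J k z =
     (\<Sum>j<n. \<Sum>i<m. c j i * proxy_Z m K T c g mu1 eta selX selA J k k K j i)
     + real T / real K * (\<Sum>k'=k..K. \<Sum>i<m. real k' *
         g k' i ((z i + (\<Sum>j<n. proxy_Z m K T c g mu1 eta selX selA J k k k' j i))
                 / (real k' * real T / real K)))"

definition arrivals_in_epoch :: "nat \<Rightarrow> nat \<Rightarrow> (nat \<Rightarrow> nat) \<Rightarrow> nat \<Rightarrow> nat \<Rightarrow> nat" where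
  "arrivals_in_epoch K T J k j = card {t \<in> epoch_periods K T k. J t = j}"

definition offline_feasible where
  "offline_feasible m n K T S J k =
     {Z :: nat \<Rightarrow> nat \<Rightarrow> nat \<Rightarrow> nat.
        (\<forall>k' j i. Z k' j i \<noteq> 0 \<longrightarrow> k \<le> k' \<and> k' \<le> K \<and> j < n \<and> i \<in> S j) \<and>
        (\<forall>k'\<in>{k..K}. \<forall>j<n. (\<Sum>i<m. Z k' j i) \<le> arrivals_in_epoch K T J k j)}"

definition offline_obj where
  "offline_obj m n K T c g k z Z =
     (\<Sum>j<n. \<Sum>i<m. c j i * (\<Sum>k'=k..K. real (Z k' j i)))
     + real T / real K * (\<Sum>k'=k..K. \<Sum>i<m. real k' *
         g k' i ((z i + (\<Sum>j<n. \<Sum>k''=k..k'. real (Z k'' j i))) / (real k' * real T / real K)))"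

definition proxy_off where
  "proxy_off m n K T c S g J k z =
     Inf (offline_obj m n K T c g k z ` offline_feasible m n K T S J k)"

definition proxy_regret where
  "proxy_regret m n K T c S g mu1 eta selX selA J k =
     (let z = usage m K T c g mu1 eta selX selA J ((k - 1) * (T div K))
      in proxy_V m n K T c g mu1 eta selX selA J k z - proxy_off m n K T c S g J k z)"

definition expected_proxy_regret where
  "expected_proxy_regret m n K T c S g mu1 eta selX selA P k =
     measure_pmf.expectation (Pi_pmf {1..T} 0 (\<lambda>_. P))
       (\<lambda>J. proxy_regret m n K T c S g mu1 eta selX selA J k)"

end

theory Submission
  imports Defs
begin

lemma compact_unit_box: "compact unit_box"
proof -
  have cI: "compact (Pi UNIV (\<lambda>_::nat. {0..1::real}))"
    using compactin_PiE[of "\<lambda>_::nat. euclidean" UNIV "\<lambda>_. {0..1::real}"]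
    by (simp add: euclidean_product_topology PiE_UNIV_domain compactin_euclidean_iff)
  have "compact (Pi UNIV (\<lambda>_::nat. Pi UNIV (\<lambda>_::nat. {0..1::real})))"
    using compactin_PiE[of "\<lambda>_::nat. euclidean" UNIV "\<lambda>_. Pi UNIV (\<lambda>_::nat. {0..1::real})"] cI
    by (simp add: euclidean_product_topology PiE_UNIV_domain compactin_euclidean_iff)
  moreover have "unit_box = Pi UNIV (\<lambda>_::nat. Pi UNIV (\<lambda>_::nat. {0..1::real}))"
    by (auto simp: unit_box_def Pi_iff)
  ultimately show ?thesis by simp
qed

lemma cont_coord: "continuous_on A (\<lambda>a::nat\<Rightarrow>nat\<Rightarrow>real. a k i)"
proof -
  have "continuous_on UNIV (\<lambda>a::nat\<Rightarrow>nat\<Rightarrow>real. a k)" by simp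
  moreover have "continuous_on UNIV (\<lambda>f::nat\<Rightarrow>real. f i)" by simp
  ultimately have "continuous_on UNIV ((\<lambda>f::nat\<Rightarrow>real. f i) \<circ> (\<lambda>a::nat\<Rightarrow>nat\<Rightarrow>real. a k))"
    using continuous_on_compose[of UNIV "(\<lambda>a::nat\<Rightarrow>nat\<Rightarrow>real. a k)" "\<lambda>f::nat\<Rightarrow>real. f i"]
    using continuous_on_subset[OF \<open>continuous_on UNIV (\<lambda>f::nat\<Rightarrow>real. f i)\<close>, of "range (\<lambda>a::nat\<Rightarrow>nat\<Rightarrow>real. a k)"]
    by (simp add: o_def)
  then show ?thesis by (auto simp: o_def intro: continuous_on_subset)
qed

lemma arg01:
  fixes u s NN :: real
  assumes "0 \<le> u" "u \<le> (real k - 1) * NN" "NN > 0" "1 \<le> k" "k \<le> k'" "0 \<le> s" "s \<le> real k' - real k + 1"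
  shows "u / (real k' * NN) + s / real k' \<in> {0..1}"
proof -
  have kp: "real k' > 0" using assms by simp
  have "u / (real k' * NN) \<le> (real k - 1) / real k'"
    using assms kp by (simp add: field_simps)
  moreover have "s / real k' \<le> (real k' - real k + 1) / real k'"
    using assms kp by (simp add: divide_right_mono)
  ultimately have "u / (real k' * NN) + s / real k' \<le> (real k - 1) / real k' + (real k' - real k + 1) / real k'"
    by linarith
  also have "\<dots> = 1" using kp by (simp add: field_simps)
  finally show ?thesis using assms kp by auto
qed

lemma sum_box_le:
  assumes "a \<in> unit_box" "k \<le> k'"
  shows "0 \<le> (\<Sum>k''=k..k'. a k'' i) \<and> (\<Sum>k''=k..k'. a k'' i) \<le> real k' - real k + 1"
proof -
  have "(\<Sum>k''=k..k'. a k'' i) \<le> (\<Sum>k''=k..k'. 1)"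
    using assms by (intro sum_mono) (auto simp: unit_box_def)
  also have "\<dots> = real k' - real k + 1" using assms by (simp add: of_nat_diff)
  finally show ?thesis using assms by (auto intro: sum_nonneg simp: unit_box_def)
qed

lemma aobj_min_exists:
  assumes gcont: "\<forall>k'\<in>{k..K}. \<forall>i<m. continuous_on {0..1} (g k' i)"
    and U0: "\<forall>i<m. 0 \<le> U0 i \<and> U0 i \<le> (real k - 1) * (real T / real K)"
    and k1: "1 \<le> k" and TK: "real T / real K > 0"
  shows "\<exists>a\<in>unit_box. \<forall>b\<in>unit_box. a_objective m K T g k U0 mu a \<le> a_objective m K T g k U0 mu b"
proof -
  have c1: "continuous_on unit_box (\<lambda>a. g k' i (U0 i / (real k' * real T / real K) + (\<Sum>k''=k..k'. a k'' i) / real k'))"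
    if "k' \<in> {k..K}" "i < m" for k' i
  proof -
    have gc: "continuous_on {0..1} (g k' i)" using gcont that by auto
    have ce: "continuous_on unit_box (\<lambda>a. U0 i / (real k' * real T / real K) + (\<Sum>k''=k..k'. a k'' i) / real k')"
      using that k1 by (intro continuous_intros cont_coord) auto
    have im: "(\<lambda>a. U0 i / (real k' * real T / real K) + (\<Sum>k''=k..k'. a k'' i) / real k') ` unit_box \<subseteq> {0..1}"
    proof
      fix y assume "y \<in> (\<lambda>a. U0 i / (real k' * real T / real K) + (\<Sum>k''=k..k'. a k'' i) / real k') ` unit_box"
      then obtain a where a: "a \<in> unit_box" and y: "y = U0 i / (real k' * (real T / real K)) + (\<Sum>k''=k..k'. a k'' i) / real k'"
        by auto
      show "y \<in> {0..1}" unfolding y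
        using arg01[of "U0 i" k "real T / real K" k' "\<Sum>k''=k..k'. a k'' i"] U0 that k1 TK sum_box_le[OF a, of k k' i]
        by auto
    qed
    show ?thesis by (rule continuous_on_compose2[OF gc ce im])
  qed
  have cont: "continuous_on unit_box (a_objective m K T g k U0 mu)"
    unfolding a_objective_def
    by (intro continuous_intros cont_coord c1) auto
  have ne: "unit_box \<noteq> {}" by (auto simp: unit_box_def intro!: exI[of _ "\<lambda>_ _. 0"])
  show ?thesis using continuous_attains_inf[OF compact_unit_box ne cont] by blast
qed

lemma subgrad:
  fixes f :: "real \<Rightarrow> real"
  assumes cv: "convex_on {0..1} f" and lip: "L-lipschitz_on {0..1} f" and x: "x \<in> {0..1}"
  shows "\<exists>d. \<bar>d\<bar> \<le> L \<and> (\<forall>y\<in>{0..1}. f x + d * (y - x) \<le> f y)"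
proof -
  have L0: "0 \<le> L" using lip by (simp add: lipschitz_on_def)
  have lipd: "\<bar>f u - f v\<bar> \<le> L * \<bar>u - v\<bar>" if "u \<in> {0..1}" "v \<in> {0..1}" for u v
    using lip that by (simp add: lipschitz_on_def dist_real_def)
  show ?thesis
  proof (cases "x = 0")
    case True
    show ?thesis
    proof (intro exI[of _ "-L"] conjI ballI)
      show "\<bar>-L\<bar> \<le> L" using L0 by simp
      fix y :: real assume y: "y \<in> {0..1}"
      have "\<bar>f y - f 0\<bar> \<le> L * \<bar>y - 0\<bar>" using lipd[OF y, of 0] by simp
      then show "f x + - L * (y - x) \<le> f y" using True y by (auto simp: abs_if split: if_splits)
    qed
  next
    case False
    then have xp: "0 < x" using x by auto
    define A where "A = {(f x - f y) / (x - y) | y. y \<in> {0..<x}}"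
    have Ane: "A \<noteq> {}" using xp unfolding A_def by auto
    have Abd: "a \<le> L" if aA: "a \<in> A" for a
    proof -
      obtain y where y: "y \<in> {0..<x}" and a: "a = (f x - f y) / (x - y)" using aA A_def by auto
      have "\<bar>f x - f y\<bar> \<le> L * \<bar>x - y\<bar>" using lipd[OF x, of y] y x by auto
      then have "f x - f y \<le> L * (x - y)" using y by auto
      then show ?thesis unfolding a using y by (simp add: divide_le_eq)
    qed
    have Abd2: "- L \<le> a" if aA: "a \<in> A" for a
    proof -
      obtain y where y: "y \<in> {0..<x}" and a: "a = (f x - f y) / (x - y)" using aA A_def by auto
      have "\<bar>f x - f y\<bar> \<le> L * \<bar>x - y\<bar>" using lipd[OF x, of y] y x by auto
      then have "- L * (x - y) \<le> f x - f y" using y by auto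
      then show ?thesis unfolding a using y by (simp add: le_divide_eq)
    qed
    have bdd: "bdd_above A" using Abd by (auto simp: bdd_above_def)
    define d where "d = Sup A"
    have dle: "d \<le> L" unfolding d_def by (rule cSup_least[OF Ane]) (use Abd in auto)
    have dge: "- L \<le> d"
    proof -
      obtain a where "a \<in> A" using Ane by auto
      then show ?thesis using Abd2[of a] cSup_upper[OF _ bdd, of a] unfolding d_def by auto
    qed
    show ?thesis
    proof (intro exI[of _ d] conjI ballI)
      show "\<bar>d\<bar> \<le> L" using dle dge by auto
      fix y :: real assume y: "y \<in> {0..1}"
      consider "y < x" | "y = x" | "x < y" by linarith
      then show "f x + d * (y - x) \<le> f y"
      proof cases
        case 1
        then have "(f x - f y) / (x - y) \<in> A" using y unfolding A_def by auto
        then have "(f x - f y) / (x - y) \<le> d" unfolding d_def using cSup_upper[OF _ bdd] by auto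
        then have "f x - f y \<le> d * (x - y)" using 1 by (simp add: divide_le_eq)
        then show ?thesis by (simp add: algebra_simps)
      next
        case 2 then show ?thesis by simp
      next
        case 3
        have "d \<le> (f y - f x) / (y - x)" unfolding d_def
        proof (rule cSup_least[OF Ane])
          fix a assume "a \<in> A"
          then obtain w where w: "w \<in> {0..<x}" and a: "a = (f x - f w) / (x - w)" unfolding A_def by auto
          have w1: "w \<in> {0..1}" using w x by auto
          have s1: "(f w - f x) / (w - x) \<le> (f w - f y) / (w - y)"
            using convex_on_slope_le(1)[OF cv w1 y, of x] w 3 by auto
          have s2: "(f w - f y) / (w - y) \<le> (f x - f y) / (x - y)"
            using convex_on_slope_le(2)[OF cv w1 y, of x] w 3 by auto
          have e1: "(f w - f x) / (w - x) = (f x - f w) / (x - w)"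
            by (metis minus_diff_eq minus_divide_divide)
          have e2: "(f x - f y) / (x - y) = (f y - f x) / (y - x)"
            by (metis minus_diff_eq minus_divide_divide)
          show "a \<le> (f y - f x) / (y - x)" using s1 s2 e1 e2 a by linarith
        qed
        then have "d * (y - x) \<le> f y - f x" using 3 by (simp add: le_divide_eq)
        then show ?thesis by simp
      qed
    qed
  qed
qed

lemma ogd:
  fixes m a x :: "nat \<Rightarrow> real" and eta nu :: real
  assumes eta: "eta > 0" and rec: "\<forall>t\<in>{s..<s+N}. m (Suc t) = m t + eta * (a t - x t)"
  shows "(\<Sum>t\<in>{s..<s+N}. (m t - nu) * (x t - a t))
         \<le> (m s - nu)^2 / (2*eta) + eta / 2 * (\<Sum>t\<in>{s..<s+N}. (a t - x t)^2)"
proof -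
  have eq: "(\<Sum>t\<in>{s..<s+N}. (m t - nu) * (x t - a t))
         = (m s - nu)^2 / (2*eta) - (m (s+N) - nu)^2 / (2*eta) + eta / 2 * (\<Sum>t\<in>{s..<s+N}. (a t - x t)^2)"
    using rec
  proof (induction N)
    case 0 then show ?case by simp
  next
    case (Suc N)
    have IH: "(\<Sum>t\<in>{s..<s+N}. (m t - nu) * (x t - a t))
         = (m s - nu)^2 / (2*eta) - (m (s+N) - nu)^2 / (2*eta) + eta / 2 * (\<Sum>t\<in>{s..<s+N}. (a t - x t)^2)"
      using Suc by auto
    have r: "m (Suc (s+N)) = m (s+N) + eta * (a (s+N) - x (s+N))" using Suc.prems by auto
    have "(m (s+N) - nu) * (x (s+N) - a (s+N)) = (m (s+N) - nu)^2 / (2*eta) - (m (Suc (s+N)) - nu)^2 / (2*eta)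
            + eta / 2 * (a (s+N) - x (s+N))^2"
      unfolding r using eta by (simp add: field_simps power2_eq_square)
    then show ?case using IH by (simp add: algebra_simps)
  qed
  have "0 \<le> (m (s+N) - nu)^2 / (2*eta)" using eta by simp
  then show ?thesis unfolding eq by linarith
qed

lemma tri_swap:
  fixes f h :: "nat \<Rightarrow> real"
  shows "(\<Sum>k'=k..K. f k' * (\<Sum>k''=k..k'. h k'')) = (\<Sum>k''=k..K. h k'' * (\<Sum>k'=k''..K. f k'))"
proof -
  have "(\<Sum>k'=k..K. f k' * (\<Sum>k''=k..k'. h k'')) = (\<Sum>k'\<in>{k..K}. \<Sum>k''\<in>{k''\<in>{k..K}. k'' \<le> k'}. f k' * h k'')"
    by (intro sum.cong) (auto simp: sum_distrib_left intro!: sum.cong)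
  also have "\<dots> = (\<Sum>k''\<in>{k..K}. \<Sum>k'\<in>{k'\<in>{k..K}. k'' \<le> k'}. f k' * h k'')"
    by (rule sum.swap_restrict) auto
  also have "\<dots> = (\<Sum>k''=k..K. h k'' * (\<Sum>k'=k''..K. f k'))"
    by (intro sum.cong) (auto simp: sum_distrib_left mult.commute intro!: sum.cong)
  finally show ?thesis .
qed

locale dgd =
  fixes m n K T :: nat and c :: "nat \<Rightarrow> nat \<Rightarrow> real" and S :: "nat \<Rightarrow> nat set"
    and g :: "nat \<Rightarrow> nat \<Rightarrow> real \<Rightarrow> real" and L :: real and mu1 :: "nat \<Rightarrow> nat \<Rightarrow> real"
    and eta :: real
    and selX :: "nat \<Rightarrow> nat list \<Rightarrow> nat \<Rightarrow> nat \<Rightarrow> (nat \<Rightarrow> real) \<Rightarrow> (nat \<Rightarrow> real)"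
    and selA :: "nat \<Rightarrow> nat list \<Rightarrow> ((nat \<Rightarrow> nat \<Rightarrow> real) \<Rightarrow> real) \<Rightarrow> (nat \<Rightarrow> nat \<Rightarrow> real)"
  assumes K1: "1 \<le> K" and Kdvd: "K dvd T" and Tpos: "0 < T"
    and S_sub: "\<forall>j<n. S j \<subseteq> {..<m}"
    and g_props: "\<forall>k\<in>{1..K}. \<forall>i<m. convex_on {0..1} (g k i) \<and> L-lipschitz_on {0..1} (g k i)"
    and valid: "valid_selectors m n S selX selA"
    and etapos: "0 < eta"
begin

abbreviation "N \<equiv> T div K"

lemma N_pos: "0 < N"
  using K1 Kdvd Tpos by (auto elim!: dvdE)

lemma TK: "real T / real K = real N"
  using K1 Kdvd by (auto elim!: dvdE)

lemma KN: "K * N = T"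
  using Kdvd by simp

definition "st J t = dgd_state m K T c g mu1 eta selX selA J t"
definition "sd J t = step_data m K T c g mu1 selX selA J t (st J (t - 1))"
definition "muT J t = fst (sd J t)"
definition "U0T J t = fst (snd (sd J t))"
definition "xT J t = fst (snd (snd (sd J t)))"
definition "aT J t = snd (snd (snd (sd J t)))"
definition "zz J k = usage m K T c g mu1 eta selX selA J ((k - 1) * N)"
definition "Qv j r = (\<Sum>i<m. selX 0 [] 0 j r i * r i)"
definition "phi k z mu = a_objective m K T g k z mu (selA 0 [] (a_objective m K T g k z mu))"
definition "Dt J k z t mu = (\<Sum>k''=k..K. Qv (J t) (\<lambda>i. c (J t) i - mu k'' i)) + phi k z mu"
definition "goodJ J \<longleftrightarrow> (\<forall>t\<in>{1..T}. J t < n)"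
definition "ep k = epoch_periods K T k"

lemma sd_Suc: "sd J (Suc t) = step_data m K T c g mu1 selX selA J (Suc t) (st J t)"
  by (simp add: sd_def)

lemma st_0: "st J 0 = (mu1, (\<lambda>i. 0), (\<lambda>i. 0))"
  by (simp add: st_def)

lemma st_Suc: "st J (Suc t) =
   ((\<lambda>k' i. if epoch_of K T (Suc t) \<le> k' then muT J (Suc t) k' i + eta * (aT J (Suc t) k' i - xT J (Suc t) k' i)
            else muT J (Suc t) k' i),
    (\<lambda>i. fst (snd (st J t)) i + xT J (Suc t) (epoch_of K T (Suc t)) i),
    U0T J (Suc t))"
proof -
  have "st J (Suc t) = (let (mu', U0', xt, a) = sd J (Suc t);
          k = epoch_of K T (Suc t);
          U = fst (snd (st J t));
          mu'' = (\<lambda>k' i. if k \<le> k' then mu' k' i + eta * (a k' i - xt k' i) else mu' k' i)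
      in (mu'', (\<lambda>i. U i + xt k i), U0'))"
    unfolding sd_Suc st_def by simp
  then show ?thesis unfolding muT_def aT_def xT_def U0T_def by (simp add: Let_def case_prod_unfold)
qed

lemma muT_eq: "muT J (Suc t) = (if Suc t = (epoch_of K T (Suc t) - 1) * N + 1
    then (\<lambda>k' i. if epoch_of K T (Suc t) \<le> k' then mu1 k' i else fst (st J t) k' i) else fst (st J t))"
  by (simp add: muT_def sd_def step_data_def Let_def case_prod_unfold)

lemma U0T_eq: "U0T J (Suc t) = (if Suc t = (epoch_of K T (Suc t) - 1) * N + 1
    then fst (snd (st J t)) else snd (snd (st J t)))"
  by (simp add: U0T_def sd_def step_data_def Let_def case_prod_unfold)

lemma xT_eq: "xT J t k' = selX t (map J [1..<t + 1]) k' (J t) (\<lambda>i. c (J t) i - muT J t k' i)"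
  by (simp add: xT_def muT_def sd_def step_data_def Let_def case_prod_unfold)

lemma aT_eq: "aT J t = selA t (map J [1..<t + 1]) (a_objective m K T g (epoch_of K T t) (U0T J t) (muT J t))"
  by (simp add: aT_def muT_def U0T_def sd_def step_data_def Let_def case_prod_unfold)

lemma proxy_x_eq: "proxy_x m K T c g mu1 eta selX selA J t k' = xT J t k'"
  by (simp add: proxy_x_def xT_def sd_def st_def)

lemma impl_x_eq: "impl_x m K T c g mu1 eta selX selA J t = xT J t (epoch_of K T t)"
  by (simp add: impl_x_def proxy_x_eq)

lemma U_usage: "fst (snd (st J t)) i = usage m K T c g mu1 eta selX selA J t i"
proof (induction t)
  case 0 then show ?case by (simp add: st_0 usage_def)
next
  case (Suc t)
  then show ?case by (simp add: st_Suc usage_def impl_x_eq)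
qed

lemma st_dep: "(\<And>\<tau>. 1 \<le> \<tau> \<Longrightarrow> \<tau> \<le> t \<Longrightarrow> J \<tau> = J' \<tau>) \<Longrightarrow> st J t = st J' t"
proof (induction t)
  case 0 then show ?case by (simp add: st_0)
next
  case (Suc t)
  have IH: "st J t = st J' t" using Suc by auto
  have mp: "map J [1..<Suc t + 1] = map J' [1..<Suc t + 1]"
    using Suc.prems by (intro map_cong) auto
  have jt: "J (Suc t) = J' (Suc t)" using Suc.prems by auto
  have sdeq: "sd J (Suc t) = sd J' (Suc t)"
    unfolding sd_Suc step_data_def Let_def IH mp jt ..
  show ?case
    by (simp only: st_Suc muT_def aT_def xT_def U0T_def sdeq IH)
qed

end

context dgd begin

lemma ep_eq: "ep k = {(k - 1) * N + 1 .. k * N}"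
  by (simp add: ep_def epoch_periods_def)

lemma epoch_in:
  assumes "k \<in> {1..K}" "t \<in> ep k"
  shows "epoch_of K T t = k"
proof -
  have t: "(k - 1) * N + 1 \<le> t" "t \<le> k * N" using assms by (auto simp: ep_eq)
  have "(t - 1) div N = k - 1"
  proof (rule div_nat_eqI)
    show "N * (k - 1) \<le> t - 1" using t by (simp add: mult.commute)
    have "k * N = (k - 1) * N + N" using assms by (cases k) auto
    then show "t - 1 < N * Suc (k - 1)" using t N_pos assms by (auto simp: mult.commute)
  qed
  then show ?thesis using assms by (simp add: epoch_of_def)
qed

lemma ep_sub:
  assumes "k \<in> {1..K}"
  shows "ep k \<subseteq> {1..T}"
proof -
  have "k * N \<le> K * N" using assms by auto
  then show ?thesis using KN by (auto simp: ep_eq)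
qed

lemma card_ep:
  assumes "k \<in> {1..K}"
  shows "card (ep k) = N"
proof -
  have "k * N = (k - 1) * N + N" using assms by (cases k) auto
  then show ?thesis by (simp add: ep_eq)
qed

lemma finite_ep: "finite (ep k)" by (simp add: ep_eq)

lemma selX_props:
  assumes "j < n"
  shows "selX t h k' j r \<in> feasX m S j \<and> (\<forall>x\<in>feasX m S j. (\<Sum>i<m. selX t h k' j r i * r i) \<le> (\<Sum>i<m. x i * r i))"
  using valid assms unfolding valid_selectors_def by blast

lemma Qv_le: "j < n \<Longrightarrow> x \<in> feasX m S j \<Longrightarrow> Qv j r \<le> (\<Sum>i<m. x i * r i)"
  using selX_props[of j 0 "[]" 0 r] by (auto simp: Qv_def)

lemma Qv_eq: "j < n \<Longrightarrow> (\<Sum>i<m. selX t h k' j r i * r i) = Qv j r"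
  using selX_props[of j t h k' r] selX_props[of j 0 "[]" 0 r] unfolding Qv_def
  by (meson order_antisym)

lemma zero_feasX: "(\<lambda>_. 0) \<in> feasX m S j"
  by (simp add: feasX_def)

lemma Qv_nonpos: "j < n \<Longrightarrow> Qv j r \<le> 0"
  using Qv_le[OF _ zero_feasX, of j r] by simp

lemma Qv_le_coord:
  assumes "j < n" "i \<in> S j"
  shows "Qv j r \<le> r i"
proof -
  have im: "i < m" using S_sub assms by auto
  have "(\<lambda>i'. if i' = i then 1 else 0) \<in> feasX m S j"
    using im assms by (auto simp: feasX_def)
  from Qv_le[OF assms(1) this, of r] show ?thesis using im by (simp add: if_distrib[where f="\<lambda>x. x * _"] cong: if_cong)
qed

lemma feasX_01: "x \<in> feasX m S j \<Longrightarrow> 0 \<le> x i \<and> x i \<le> 1"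
  unfolding feasX_def by (cases "x i = 0") auto

lemma feasX_sum: "x \<in> feasX m S j \<Longrightarrow> (\<Sum>i<m. x i) \<le> 1"
  unfolding feasX_def by auto

lemma feasX_out: "x \<in> feasX m S j \<Longrightarrow> i \<notin> S j \<Longrightarrow> x i = 0"
  unfolding feasX_def by auto

lemma xT_feas:
  assumes "goodJ J" "t \<in> {1..T}"
  shows "xT J t k' \<in> feasX m S (J t)"
  using selX_props[of "J t"] assms by (simp add: xT_eq goodJ_def)

lemma xT_val:
  assumes "goodJ J" "t \<in> {1..T}"
  shows "(\<Sum>i<m. xT J t k' i * (c (J t) i - muT J t k' i)) = Qv (J t) (\<lambda>i. c (J t) i - muT J t k' i)"
  using Qv_eq assms by (simp add: xT_eq goodJ_def)

lemma usage_bounds: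
  assumes "goodJ J" "s \<le> T"
  shows "0 \<le> usage m K T c g mu1 eta selX selA J s i \<and> usage m K T c g mu1 eta selX selA J s i \<le> real s"
proof -
  have b: "0 \<le> impl_x m K T c g mu1 eta selX selA J t i \<and> impl_x m K T c g mu1 eta selX selA J t i \<le> 1"
    if "t \<in> {1..s}" for t
    using feasX_01[OF xT_feas[OF assms(1), of t]] that assms by (simp add: impl_x_eq)
  have "usage m K T c g mu1 eta selX selA J s i \<le> (\<Sum>t=1..s. 1)"
    unfolding usage_def using b by (intro sum_mono) auto
  then show ?thesis unfolding usage_def using b by (auto intro: sum_nonneg)
qed

lemma zz_bounds:
  assumes "goodJ J" "k \<in> {1..K}"
  shows "0 \<le> zz J k i \<and> zz J k i \<le> (real k - 1) * real N"
proof -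
  have "(k - 1) * N \<le> K * N" using assms by auto
  then have "(k - 1) * N \<le> T" using KN by simp
  from usage_bounds[OF assms(1) this, of i] show ?thesis using assms by (auto simp: zz_def of_nat_diff)
qed

lemma gcont: "k' \<in> {1..K} \<Longrightarrow> i < m \<Longrightarrow> continuous_on {0..1} (g k' i)"
  using g_props lipschitz_on_continuous_on by blast

lemma amin_exists_z:
  assumes "k \<in> {1..K}" "\<forall>i<m. 0 \<le> z i \<and> z i \<le> (real k - 1) * real N"
  shows "\<exists>a\<in>unit_box. \<forall>b\<in>unit_box. a_objective m K T g k z mu a \<le> a_objective m K T g k z mu b"
  by (rule aobj_min_exists) (use assms gcont N_pos TK in auto)

lemma selA_min:
  assumes "k \<in> {1..K}" "\<forall>i<m. 0 \<le> z i \<and> z i \<le> (real k - 1) * real N"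
  shows "selA t h (a_objective m K T g k z mu) \<in> unit_box \<and>
    (\<forall>b\<in>unit_box. a_objective m K T g k z mu (selA t h (a_objective m K T g k z mu)) \<le> a_objective m K T g k z mu b)"
  using valid amin_exists_z[OF assms, of mu] unfolding valid_selectors_def by blast

lemma phi_le:
  assumes "k \<in> {1..K}" "\<forall>i<m. 0 \<le> z i \<and> z i \<le> (real k - 1) * real N" "b \<in> unit_box"
  shows "phi k z mu \<le> a_objective m K T g k z mu b"
  using selA_min[OF assms(1,2)] assms(3) by (simp add: phi_def)

lemma phi_eq:
  assumes "k \<in> {1..K}" "\<forall>i<m. 0 \<le> z i \<and> z i \<le> (real k - 1) * real N"
  shows "a_objective m K T g k z mu (selA t h (a_objective m K T g k z mu)) = phi k z mu"
  using selA_min[OF assms, of t h mu] selA_min[OF assms, of 0 "[]" mu] unfolding phi_def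
  by (meson order_antisym)

end

context dgd begin

lemma kTK: "real k' * real T / real K = real k' * real N"
  using TK by (simp add: times_divide_eq_right[symmetric])

lemma start_in: "k \<in> {1..K} \<Longrightarrow> (k - 1) * N + 1 \<in> ep k"
proof -
  assume k: "k \<in> {1..K}"
  have "k * N = (k - 1) * N + N" using k by (cases k) auto
  then show ?thesis using N_pos by (simp add: ep_eq)
qed

lemma ep_pos: "k \<in> {1..K} \<Longrightarrow> t \<in> ep k \<Longrightarrow> 1 \<le> t"
  by (auto simp: ep_eq)

lemma st_fst_ep:
  assumes "k \<in> {1..K}" "t \<in> ep k" "k \<le> k''"
  shows "fst (st J t) k'' i = muT J t k'' i + eta * (aT J t k'' i - xT J t k'' i)"
proof -
  obtain t' where t': "t = Suc t'" using ep_pos[OF assms(1,2)] by (cases t) auto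
  show ?thesis using epoch_in[OF assms(1,2)] assms(3) unfolding t' st_Suc by simp
qed

lemma muT_notstart:
  assumes "k \<in> {1..K}" "Suc t \<in> ep k" "Suc t \<noteq> (k - 1) * N + 1"
  shows "muT J (Suc t) = fst (st J t)"
  using assms epoch_in[OF assms(1,2)] by (simp add: muT_eq)

lemma muT_start:
  assumes "k \<in> {1..K}" "k \<le> k''"
  shows "muT J ((k - 1) * N + 1) k'' i = mu1 k'' i"
  using assms epoch_in[OF assms(1) start_in[OF assms(1)]] by (simp add: muT_eq)

lemma U0T_ep:
  assumes "k \<in> {1..K}" "t \<in> ep k"
  shows "U0T J t = zz J k"
proof -
  have "\<forall>r. r < N \<longrightarrow> U0T J ((k - 1) * N + 1 + r) = zz J k"
  proof (intro allI)
    fix r show "r < N \<longrightarrow> U0T J ((k - 1) * N + 1 + r) = zz J k"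
    proof (induction r)
      case 0
      have "U0T J (Suc ((k - 1) * N)) = fst (snd (st J ((k - 1) * N)))"
        using epoch_in[OF assms(1) start_in[OF assms(1)]] by (simp add: U0T_eq)
      then show ?case by (simp add: zz_def U_usage[abs_def])
    next
      case (Suc r)
      show ?case
      proof
        assume r: "Suc r < N"
        have inep: "Suc ((k - 1) * N + 1 + r) \<in> ep k"
          using r assms(1) by (cases k) (auto simp: ep_eq)
        have "U0T J (Suc ((k - 1) * N + 1 + r)) = snd (snd (st J ((k - 1) * N + 1 + r)))"
          using epoch_in[OF assms(1) inep] by (simp add: U0T_eq)
        also have "\<dots> = U0T J ((k - 1) * N + 1 + r)"
          by (simp add: st_Suc)
        finally show "U0T J ((k - 1) * N + 1 + Suc r) = zz J k" using Suc r by simp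
      qed
    qed
  qed
  moreover
  have kk: "k * N = (k - 1) * N + N" using assms(1) by (cases k) auto
  have "t - ((k-1)*N+1) < N" "t = (k-1)*N+1 + (t - ((k-1)*N+1))" using assms(2) kk by (auto simp: ep_eq)
  ultimately show ?thesis by auto
qed

lemma aT_box:
  assumes "goodJ J" "k \<in> {1..K}" "t \<in> ep k"
  shows "aT J t \<in> unit_box \<and> a_objective m K T g k (zz J k) (muT J t) (aT J t) = phi k (zz J k) (muT J t)"
proof -
  have zb: "\<forall>i<m. 0 \<le> zz J k i \<and> zz J k i \<le> (real k - 1) * real N" using zz_bounds[OF assms(1,2)] by auto
  have a: "aT J t = selA t (map J [1..<t + 1]) (a_objective m K T g k (zz J k) (muT J t))"
    using aT_eq epoch_in[OF assms(2,3)] U0T_ep[OF assms(2,3)] by simp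
  show ?thesis unfolding a using selA_min[OF assms(2) zb] phi_eq[OF assms(2) zb] by auto
qed

end

context dgd begin

lemma xT_01:
  assumes "goodJ J" "k \<in> {1..K}" "t \<in> ep k"
  shows "0 \<le> xT J t k'' i \<and> xT J t k'' i \<le> 1"
  using feasX_01[OF xT_feas[OF assms(1)]] ep_sub[OF assms(2)] assms(3) by auto

lemma g_step:
  assumes J: "goodJ J" and k: "k \<in> {1..K}" and k': "k' \<in> {k..K}" and i: "i < m"
  shows "\<exists>d. \<bar>d\<bar> \<le> L \<and>
    real N * (real k' * g k' i ((zz J k i + (\<Sum>t\<in>ep k. \<Sum>k''=k..k'. xT J t k'' i)) / (real k' * real N)))
    \<le> (\<Sum>t\<in>ep k. real k' * g k' i (zz J k i / (real k' * real N) + (\<Sum>k''=k..k'. aT J t k'' i) / real k'))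
       + d * ((\<Sum>t\<in>ep k. \<Sum>k''=k..k'. xT J t k'' i) - (\<Sum>t\<in>ep k. \<Sum>k''=k..k'. aT J t k'' i))"
proof -
  define z where "z = zz J k i"
  define X where "X = (\<Sum>t\<in>ep k. \<Sum>k''=k..k'. xT J t k'' i)"
  define Aa where "Aa = (\<Sum>t\<in>ep k. \<Sum>k''=k..k'. aT J t k'' i)"
  define NN where "NN = real N"
  define ya where "ya t = z / (real k' * NN) + (\<Sum>k''=k..k'. aT J t k'' i) / real k'" for t
  have NN: "NN > 0" using N_pos NN_def by simp
  have k1: "1 \<le> k" "k \<le> k'" "k' \<le> K" using k k' by auto
  have k'1: "k' \<in> {1..K}" using k k' by auto
  have kpos: "real k' > 0" using k1 by simp
  have zb: "0 \<le> z" "z \<le> (real k - 1) * NN" using zz_bounds[OF J k] z_def NN_def by auto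
  have cardE: "real (card (ep k)) = NN" using card_ep[OF k] NN_def by simp
  have cv: "convex_on {0..1} (g k' i)" and lip: "L-lipschitz_on {0..1} (g k' i)"
    using g_props k'1 i by auto
  have Xb: "0 \<le> X / NN \<and> X / NN \<le> real k' - real k + 1"
  proof -
    have "X \<le> (\<Sum>t\<in>ep k. real k' - real k + 1)" unfolding X_def
    proof (intro sum_mono)
      fix t assume t: "t \<in> ep k"
      have "(\<Sum>k''=k..k'. xT J t k'' i) \<le> (\<Sum>k''=k..k'. 1)"
        using xT_01[OF J k t] by (intro sum_mono) auto
      then show "(\<Sum>k''=k..k'. xT J t k'' i) \<le> real k' - real k + 1" using k1 by (simp add: of_nat_diff)
    qed
    also have "\<dots> = NN * (real k' - real k + 1)" using cardE by simp
    finally have "X \<le> NN * (real k' - real k + 1)" .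
    moreover have "0 \<le> X" unfolding X_def using xT_01[OF J k] by (intro sum_nonneg) auto
    ultimately show ?thesis using NN by (simp add: divide_le_eq mult.commute)
  qed
  have Ab: "0 \<le> Aa / NN \<and> Aa / NN \<le> real k' - real k + 1"
  proof -
    have "Aa \<le> (\<Sum>t\<in>ep k. real k' - real k + 1)" unfolding Aa_def
      using sum_box_le[OF conjunct1[OF aT_box[OF J k]]] k1 by (intro sum_mono) auto
    also have "\<dots> = NN * (real k' - real k + 1)" using cardE by simp
    finally have "Aa \<le> NN * (real k' - real k + 1)" .
    moreover have "0 \<le> Aa" unfolding Aa_def
      by (rule sum_nonneg) (use sum_box_le[OF conjunct1[OF aT_box[OF J k]]] k1 in blast)
    ultimately show ?thesis using NN by (simp add: divide_le_eq mult.commute)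
  qed
  define yx where "yx = (z + X) / (real k' * NN)"
  have yx_eq: "yx = z / (real k' * NN) + (X / NN) / real k'"
    unfolding yx_def by (simp add: add_divide_distrib)
  have yx01: "yx \<in> {0..1}" unfolding yx_eq using arg01[of z k NN k' "X / NN"] zb NN k1 Xb by auto
  have ya01: "ya t \<in> {0..1}" if "t \<in> ep k" for t
    unfolding ya_def using arg01[of z k NN k' "\<Sum>k''=k..k'. aT J t k'' i"] zb NN k1
      sum_box_le[OF conjunct1[OF aT_box[OF J k that]] k1(2), of i] by auto
  define yavg where "yavg = (\<Sum>t\<in>ep k. (1 / NN) *\<^sub>R ya t)"
  have yavg_eq: "yavg = z / (real k' * NN) + (Aa / NN) / real k'"
  proof -
    have "yavg = (\<Sum>t\<in>ep k. (1 / NN) * (z / (real k' * NN))) + (\<Sum>t\<in>ep k. (1/NN) * ((\<Sum>k''=k..k'. aT J t k'' i) / real k'))"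
      unfolding yavg_def ya_def by (simp add: sum.distrib distrib_left)
    also have "\<dots> = z / (real k' * NN) + (Aa / NN) / real k'"
      using cardE NN by (simp add: Aa_def sum_divide_distrib[symmetric] sum_distrib_left[symmetric])
    finally show ?thesis .
  qed
  have yavg01: "yavg \<in> {0..1}" unfolding yavg_eq using arg01[of z k NN k' "Aa / NN"] zb NN k1 Ab by auto
  have jensen: "g k' i yavg \<le> (\<Sum>t\<in>ep k. (1 / NN) * g k' i (ya t))"
    unfolding yavg_def
  proof (rule convex_on_sum[OF finite_ep _ cv])
    show "ep k \<noteq> {}" using start_in[OF k] by auto
    show "(\<Sum>t\<in>ep k. 1 / NN) = 1" using cardE NN by simp
  qed (use NN ya01 in auto)
  obtain d where d: "\<bar>d\<bar> \<le> L" and dsub: "\<forall>y\<in>{0..1}. g k' i yx + d * (y - yx) \<le> g k' i y"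
    using subgrad[OF cv lip yx01] by blast
  have s1: "g k' i yx \<le> g k' i yavg + d * (yx - yavg)" using dsub yavg01 by (auto simp: algebra_simps)
  have diff: "yx - yavg = (X - Aa) / (real k' * NN)"
    unfolding yx_eq yavg_eq using NN kpos by (simp add: field_simps)
  have "NN * (real k' * g k' i yx) \<le> NN * (real k' * (g k' i yavg + d * (yx - yavg)))"
    using s1 NN kpos by (intro mult_left_mono) auto
  also have "\<dots> = NN * real k' * g k' i yavg + d * (X - Aa)"
    unfolding diff using NN kpos by (simp add: field_simps)
  also have "\<dots> \<le> NN * real k' * (\<Sum>t\<in>ep k. (1 / NN) * g k' i (ya t)) + d * (X - Aa)"
    using jensen NN kpos by (intro add_right_mono mult_left_mono) auto
  also have "\<dots> = (\<Sum>t\<in>ep k. real k' * g k' i (ya t)) + d * (X - Aa)"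
    using NN by (simp add: sum_distrib_left)
  finally show ?thesis
    using d unfolding yx_def ya_def z_def X_def Aa_def NN_def by blast
qed

end

context dgd begin

lemma proxy_Z_eq: "proxy_Z m K T c g mu1 eta selX selA J k k1 k2 j i =
   (\<Sum>t\<in>ep k. \<Sum>k''=k1..k2. (if J t = j then xT J t k'' i else 0))"
  by (simp add: proxy_Z_def proxy_x_eq ep_def cong: if_cong)

lemma sum_type:
  assumes "goodJ J" "k \<in> {1..K}" "t \<in> ep k"
  shows "(\<Sum>j<n. if J t = j then f j else 0) = f (J t)"
proof -
  have "J t < n" using assms ep_sub[OF assms(2)] by (auto simp: goodJ_def)
  then show ?thesis by (simp add: sum.delta)
qed

lemma Jlt: "goodJ J \<Longrightarrow> k \<in> {1..K} \<Longrightarrow> t \<in> ep k \<Longrightarrow> J t < n"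
  using ep_sub by (auto simp: goodJ_def)

lemma PZ:
  assumes "goodJ J" "k \<in> {1..K}"
  shows "(\<Sum>j<n. proxy_Z m K T c g mu1 eta selX selA J k k1 k2 j i) = (\<Sum>t\<in>ep k. \<Sum>k''=k1..k2. xT J t k'' i)"
proof -
  have "(\<Sum>j<n. proxy_Z m K T c g mu1 eta selX selA J k k1 k2 j i)
      = (\<Sum>t\<in>ep k. \<Sum>k''=k1..k2. \<Sum>j<n. (if J t = j then xT J t k'' i else 0))"
    unfolding proxy_Z_eq by (subst sum.swap, rule sum.cong[OF refl], rule sum.swap)
  also have "\<dots> = (\<Sum>t\<in>ep k. \<Sum>k''=k1..k2. xT J t k'' i)"
    by (rule sum.cong[OF refl]) (use Jlt[OF assms] in simp)
  finally show ?thesis .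
qed

lemma mult_if0: "(a::real) * (if P then x else 0) = (if P then a * x else 0)" by simp

lemma PZc:
  assumes "goodJ J" "k \<in> {1..K}"
  shows "(\<Sum>j<n. \<Sum>i<m. c j i * proxy_Z m K T c g mu1 eta selX selA J k k K j i)
       = (\<Sum>t\<in>ep k. \<Sum>k''=k..K. \<Sum>i<m. c (J t) i * xT J t k'' i)"
proof -
  have "(\<Sum>j<n. \<Sum>i<m. c j i * proxy_Z m K T c g mu1 eta selX selA J k k K j i)
      = (\<Sum>i<m. \<Sum>j<n. \<Sum>t\<in>ep k. \<Sum>k''=k..K. (if J t = j then c j i * xT J t k'' i else 0))"
    unfolding proxy_Z_eq by (subst sum.swap, intro sum.cong[OF refl]) (simp add: sum_distrib_left mult_if0)
  also have "\<dots> = (\<Sum>i<m. \<Sum>t\<in>ep k. \<Sum>k''=k..K. \<Sum>j<n. (if J t = j then c j i * xT J t k'' i else 0))"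
    by (rule sum.cong[OF refl], subst sum.swap, rule sum.cong[OF refl], rule sum.swap)
  also have "\<dots> = (\<Sum>i<m. \<Sum>t\<in>ep k. \<Sum>k''=k..K. c (J t) i * xT J t k'' i)"
    by (intro sum.cong[OF refl]) (use Jlt[OF assms] in simp)
  also have "\<dots> = (\<Sum>t\<in>ep k. \<Sum>k''=k..K. \<Sum>i<m. c (J t) i * xT J t k'' i)"
    by (simp add: sum.swap[of _ "{..<m}"])
  finally show ?thesis .
qed

lemma c_decomp:
  assumes "goodJ J" "k \<in> {1..K}" "t \<in> ep k"
  shows "(\<Sum>i<m. c (J t) i * xT J t k'' i) =
         Qv (J t) (\<lambda>i. c (J t) i - muT J t k'' i) + (\<Sum>i<m. muT J t k'' i * xT J t k'' i)"
proof -
  have "(\<Sum>i<m. c (J t) i * xT J t k'' i) = (\<Sum>i<m. xT J t k'' i * (c (J t) i - muT J t k'' i)) + (\<Sum>i<m. muT J t k'' i * xT J t k'' i)"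
    by (simp add: sum.distrib[symmetric] algebra_simps)
  then show ?thesis using xT_val[OF assms(1)] ep_sub[OF assms(2)] assms(3) by auto
qed

lemma aobj_split:
  assumes "goodJ J" "k \<in> {1..K}" "t \<in> ep k"
  shows "(\<Sum>k'=k..K. \<Sum>i<m. real k' * g k' i (zz J k i / (real k' * real N) + (\<Sum>k''=k..k'. aT J t k'' i) / real k'))
      = phi k (zz J k) (muT J t) - (\<Sum>k''=k..K. \<Sum>i<m. muT J t k'' i * aT J t k'' i)"
  using conjunct2[OF aT_box[OF assms]] unfolding a_objective_def kTK
  by (simp add: sum_distrib_left)

lemma ogd_coord:
  assumes J: "goodJ J" and k: "k \<in> {1..K}" and k'': "k \<le> k''"
  shows "(\<Sum>t\<in>ep k. (muT J t k'' i + lam) * (xT J t k'' i - aT J t k'' i))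
       \<le> (mu1 k'' i + lam)^2 / (2*eta) + eta / 2 * real N"
proof -
  define s where "s = (k - 1) * N + 1"
  have E: "ep k = {s..<s+N}" unfolding s_def ep_eq
    using k by (cases k) auto
  define ms where "ms t = (if t \<in> ep k then muT J t k'' i else fst (st J (t - 1)) k'' i)" for t
  have rec: "\<forall>t\<in>{s..<s+N}. ms (Suc t) = ms t + eta * (aT J t k'' i - xT J t k'' i)"
  proof
    fix t assume t: "t \<in> {s..<s+N}"
    then have tE: "t \<in> ep k" using E by simp
    have fs: "fst (st J t) k'' i = muT J t k'' i + eta * (aT J t k'' i - xT J t k'' i)"
      using st_fst_ep[OF k tE k''] .
    show "ms (Suc t) = ms t + eta * (aT J t k'' i - xT J t k'' i)"
    proof (cases "Suc t \<in> ep k")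
      case True
      have "Suc t \<noteq> (k - 1) * N + 1" using t s_def by auto
      then have "muT J (Suc t) = fst (st J t)" using muT_notstart[OF k True] by simp
      then show ?thesis using True tE fs unfolding ms_def by simp
    next
      case False
      then show ?thesis using tE fs unfolding ms_def by simp
    qed
  qed
  have "(\<Sum>t\<in>{s..<s+N}. (ms t - (- lam)) * (xT J t k'' i - aT J t k'' i))
         \<le> (ms s - (- lam))^2 / (2*eta) + eta / 2 * (\<Sum>t\<in>{s..<s+N}. (aT J t k'' i - xT J t k'' i)^2)"
    by (rule ogd[OF etapos rec])
  moreover have "(\<Sum>t\<in>{s..<s+N}. (ms t - (- lam)) * (xT J t k'' i - aT J t k'' i))
       = (\<Sum>t\<in>ep k. (muT J t k'' i + lam) * (xT J t k'' i - aT J t k'' i))"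
    unfolding E[symmetric] by (intro sum.cong) (auto simp: ms_def)
  moreover have "ms s = mu1 k'' i"
    using start_in[OF k] muT_start[OF k k''] unfolding ms_def s_def by simp
  moreover have "(\<Sum>t\<in>{s..<s+N}. (aT J t k'' i - xT J t k'' i)^2) \<le> real N"
  proof -
    have "(\<Sum>t\<in>{s..<s+N}. (aT J t k'' i - xT J t k'' i)^2) \<le> (\<Sum>t\<in>{s..<s+N}. 1)"
    proof (intro sum_mono)
      fix t assume "t \<in> {s..<s+N}"
      then have tE: "t \<in> ep k" using E by simp
      have "0 \<le> aT J t k'' i" "aT J t k'' i \<le> 1" using conjunct1[OF aT_box[OF J k tE]] by (auto simp: unit_box_def)
      moreover have "0 \<le> xT J t k'' i" "xT J t k'' i \<le> 1" using xT_01[OF J k tE] by auto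
      ultimately have "\<bar>aT J t k'' i - xT J t k'' i\<bar> \<le> 1" by auto
      then show "(aT J t k'' i - xT J t k'' i)^2 \<le> 1"
        by (metis abs_le_square_iff abs_one power_one)
    qed
    then show ?thesis by simp
  qed
  ultimately show ?thesis using etapos
    by (smt (verit, ccfv_SIG) mult_left_mono divide_nonneg_nonneg)
qed

end

context dgd begin

definition "B0 = (\<Sum>k''=1..K. \<Sum>i<m. (mu1 k'' i)^2 + (real K * L)^2)"

lemma lam_bound:
  assumes "\<forall>k'\<in>{k..K}. \<bar>d k'\<bar> \<le> L" "1 \<le> k" "k \<le> k''" "0 \<le> L"
  shows "\<bar>\<Sum>k'=k''..K. d k'\<bar> \<le> real K * L"
proof -
  have "\<bar>\<Sum>k'=k''..K. d k'\<bar> \<le> (\<Sum>k'=k''..K. \<bar>d k'\<bar>)" by (rule sum_abs)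
  also have "\<dots> \<le> (\<Sum>k'=k''..K. L)" using assms by (intro sum_mono) auto
  also have "\<dots> = real (Suc K - k'') * L" by simp
  also have "\<dots> \<le> real K * L" using assms by (intro mult_right_mono) auto
  finally show ?thesis .
qed

lemma sq_bound:
  fixes a b B :: real
  assumes "\<bar>b\<bar> \<le> B"
  shows "(a + b)^2 / (2*eta) \<le> (a^2 + B^2) / eta"
proof -
  have e: "(a + b)^2 = 2 * a^2 + 2 * b^2 - (a - b)^2" by (simp add: power2_eq_square algebra_simps)
  have "0 \<le> (a - b)^2" by simp
  then have "(a + b)^2 \<le> 2 * a^2 + 2 * b^2" using e by linarith
  moreover have "b^2 \<le> B^2" using assms by (metis abs_le_square_iff abs_ge_self order.trans)
  ultimately have "(a + b)^2 \<le> 2 * (a^2 + B^2)" by (simp add: algebra_simps)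
  then show ?thesis using etapos by (simp add: field_simps)
qed

theorem V_upper:
  assumes J: "goodJ J" and k: "k \<in> {1..K}"
  shows "proxy_V m n K T c g mu1 eta selX selA J k (zz J k)
     \<le> (\<Sum>t\<in>ep k. Dt J k (zz J k) t (muT J t)) + B0 / eta + real K * real m * (eta * real N / 2)"
proof -
  define z where "z = zz J k"
  define X where "X k' i = (\<Sum>t\<in>ep k. \<Sum>k''=k..k'. xT J t k'' i)" for k' i
  define Aa where "Aa k' i = (\<Sum>t\<in>ep k. \<Sum>k''=k..k'. aT J t k'' i)" for k' i
  define Gs where "Gs k'' i = (\<Sum>t\<in>ep k. xT J t k'' i - aT J t k'' i)" for k'' i
  have "\<forall>p\<in>{k..K} \<times> {..<m}. \<exists>d. \<bar>d\<bar> \<le> L \<and>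
    real N * (real (fst p) * g (fst p) (snd p) ((z (snd p) + X (fst p) (snd p)) / (real (fst p) * real N)))
    \<le> (\<Sum>t\<in>ep k. real (fst p) * g (fst p) (snd p) (z (snd p) / (real (fst p) * real N) + (\<Sum>k''=k..fst p. aT J t k'' (snd p)) / real (fst p)))
       + d * (X (fst p) (snd p) - Aa (fst p) (snd p))"
    using g_step[OF J k] unfolding z_def X_def Aa_def by auto
  from bchoice[OF this] obtain D where D: "\<forall>p\<in>{k..K} \<times> {..<m}. \<bar>D p\<bar> \<le> L \<and>
    real N * (real (fst p) * g (fst p) (snd p) ((z (snd p) + X (fst p) (snd p)) / (real (fst p) * real N)))
    \<le> (\<Sum>t\<in>ep k. real (fst p) * g (fst p) (snd p) (z (snd p) / (real (fst p) * real N) + (\<Sum>k''=k..fst p. aT J t k'' (snd p)) / real (fst p)))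
       + D p * (X (fst p) (snd p) - Aa (fst p) (snd p))"
    by blast
  define d where "d k' i = D (k', i)" for k' i
  define lam where "lam k'' i = (\<Sum>k'=k''..K. d k' i)" for k'' i
  have dprop: "\<bar>d k' i\<bar> \<le> L" "real N * (real k' * g k' i ((z i + X k' i) / (real k' * real N)))
    \<le> (\<Sum>t\<in>ep k. real k' * g k' i (z i / (real k' * real N) + (\<Sum>k''=k..k'. aT J t k'' i) / real k'))
       + d k' i * (X k' i - Aa k' i)" if "k' \<in> {k..K}" "i < m" for k' i
    using D that unfolding d_def by auto
  have V: "proxy_V m n K T c g mu1 eta selX selA J k z
     = (\<Sum>t\<in>ep k. \<Sum>k''=k..K. \<Sum>i<m. c (J t) i * xT J t k'' i)
       + (\<Sum>k'=k..K. \<Sum>i<m. real N * (real k' * g k' i ((z i + X k' i) / (real k' * real N))))"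
    unfolding proxy_V_def PZc[OF J k] PZ[OF J k] kTK TK X_def by (simp add: sum_distrib_left)
  have G: "(\<Sum>k'=k..K. \<Sum>i<m. real N * (real k' * g k' i ((z i + X k' i) / (real k' * real N))))
     \<le> (\<Sum>k'=k..K. \<Sum>i<m. \<Sum>t\<in>ep k. real k' * g k' i (z i / (real k' * real N) + (\<Sum>k''=k..k'. aT J t k'' i) / real k'))
       + (\<Sum>k'=k..K. \<Sum>i<m. d k' i * (X k' i - Aa k' i))"
    unfolding sum.distrib[symmetric] by (intro sum_mono) (use dprop in auto)
  have G2: "(\<Sum>k'=k..K. \<Sum>i<m. \<Sum>t\<in>ep k. real k' * g k' i (z i / (real k' * real N) + (\<Sum>k''=k..k'. aT J t k'' i) / real k'))
     = (\<Sum>t\<in>ep k. phi k z (muT J t) - (\<Sum>k''=k..K. \<Sum>i<m. muT J t k'' i * aT J t k'' i))"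
  proof -
    have "(\<Sum>k'=k..K. \<Sum>i<m. \<Sum>t\<in>ep k. real k' * g k' i (z i / (real k' * real N) + (\<Sum>k''=k..k'. aT J t k'' i) / real k'))
      = (\<Sum>t\<in>ep k. \<Sum>k'=k..K. \<Sum>i<m. real k' * g k' i (z i / (real k' * real N) + (\<Sum>k''=k..k'. aT J t k'' i) / real k'))"
      by (subst (2) sum.swap, rule sum.cong[OF refl], rule sum.swap)
    also have "\<dots> = (\<Sum>t\<in>ep k. phi k z (muT J t) - (\<Sum>k''=k..K. \<Sum>i<m. muT J t k'' i * aT J t k'' i))"
      by (rule sum.cong[OF refl]) (use aobj_split[OF J k] in \<open>simp add: z_def\<close>)
    finally show ?thesis .
  qed
  have XA: "X k' i - Aa k' i = (\<Sum>k''=k..k'. Gs k'' i)" for k' i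
    unfolding X_def Aa_def Gs_def sum_subtractf[symmetric] by (subst sum.swap) simp
  have G3: "(\<Sum>k'=k..K. \<Sum>i<m. d k' i * (X k' i - Aa k' i)) = (\<Sum>k''=k..K. \<Sum>i<m. Gs k'' i * lam k'' i)"
  proof -
    have "(\<Sum>k'=k..K. \<Sum>i<m. d k' i * (X k' i - Aa k' i)) = (\<Sum>i<m. \<Sum>k'=k..K. d k' i * (\<Sum>k''=k..k'. Gs k'' i))"
      unfolding XA by (rule sum.swap)
    also have "\<dots> = (\<Sum>i<m. \<Sum>k''=k..K. Gs k'' i * lam k'' i)"
      unfolding lam_def by (rule sum.cong[OF refl]) (rule tri_swap)
    also have "\<dots> = (\<Sum>k''=k..K. \<Sum>i<m. Gs k'' i * lam k'' i)" by (rule sum.swap)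
    finally show ?thesis .
  qed
  have C: "(\<Sum>t\<in>ep k. \<Sum>k''=k..K. \<Sum>i<m. c (J t) i * xT J t k'' i)
     = (\<Sum>t\<in>ep k. \<Sum>k''=k..K. Qv (J t) (\<lambda>i. c (J t) i - muT J t k'' i))
       + (\<Sum>t\<in>ep k. \<Sum>k''=k..K. \<Sum>i<m. muT J t k'' i * xT J t k'' i)"
    unfolding sum.distrib[symmetric] by (intro sum.cong refl) (use c_decomp[OF J k] in auto)
  have Dsum: "(\<Sum>t\<in>ep k. Dt J k z t (muT J t)) = (\<Sum>t\<in>ep k. \<Sum>k''=k..K. Qv (J t) (\<lambda>i. c (J t) i - muT J t k'' i)) + (\<Sum>t\<in>ep k. phi k z (muT J t))"
    unfolding Dt_def by (simp add: sum.distrib)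
  have R: "(\<Sum>t\<in>ep k. \<Sum>k''=k..K. \<Sum>i<m. muT J t k'' i * xT J t k'' i)
         - (\<Sum>t\<in>ep k. \<Sum>k''=k..K. \<Sum>i<m. muT J t k'' i * aT J t k'' i)
         + (\<Sum>k''=k..K. \<Sum>i<m. Gs k'' i * lam k'' i)
       = (\<Sum>k''=k..K. \<Sum>i<m. \<Sum>t\<in>ep k. (muT J t k'' i + lam k'' i) * (xT J t k'' i - aT J t k'' i))"
  proof -
    have e1: "(\<Sum>t\<in>ep k. \<Sum>k''=k..K. \<Sum>i<m. muT J t k'' i * xT J t k'' i)
         - (\<Sum>t\<in>ep k. \<Sum>k''=k..K. \<Sum>i<m. muT J t k'' i * aT J t k'' i)
        = (\<Sum>t\<in>ep k. \<Sum>k''=k..K. \<Sum>i<m. muT J t k'' i * (xT J t k'' i - aT J t k'' i))"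
      unfolding sum_subtractf[symmetric] by (simp add: algebra_simps)
    also have "\<dots> = (\<Sum>k''=k..K. \<Sum>i<m. \<Sum>t\<in>ep k. muT J t k'' i * (xT J t k'' i - aT J t k'' i))"
      by (subst sum.swap, rule sum.cong[OF refl], rule sum.swap)
    finally have e2: "(\<Sum>t\<in>ep k. \<Sum>k''=k..K. \<Sum>i<m. muT J t k'' i * xT J t k'' i)
         - (\<Sum>t\<in>ep k. \<Sum>k''=k..K. \<Sum>i<m. muT J t k'' i * aT J t k'' i)
        = (\<Sum>k''=k..K. \<Sum>i<m. \<Sum>t\<in>ep k. muT J t k'' i * (xT J t k'' i - aT J t k'' i))" .
    have e3: "Gs k'' i * lam k'' i = (\<Sum>t\<in>ep k. lam k'' i * (xT J t k'' i - aT J t k'' i))" for k'' i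
      unfolding Gs_def by (simp add: sum_distrib_left mult.commute)
    show ?thesis unfolding e2 e3 sum.distrib[symmetric] by (simp add: algebra_simps)
  qed
  have L0: "0 \<le> L" if "i < m" for i
    using g_props K1 that by (auto simp: lipschitz_on_def)
  have Rle: "(\<Sum>k''=k..K. \<Sum>i<m. \<Sum>t\<in>ep k. (muT J t k'' i + lam k'' i) * (xT J t k'' i - aT J t k'' i))
      \<le> (\<Sum>k''=k..K. \<Sum>i<m. ((mu1 k'' i)^2 + (real K * L)^2) / eta + eta / 2 * real N)"
  proof (intro sum_mono)
    fix k'' i assume k'': "k'' \<in> {k..K}" and i: "i \<in> {..<m}"
    have "\<bar>lam k'' i\<bar> \<le> real K * L"
      unfolding lam_def using k k'' L0 i dprop(1)[of _ i] by (intro lam_bound[of k]) auto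
    then have "(mu1 k'' i + lam k'' i)^2 / (2*eta) \<le> ((mu1 k'' i)^2 + (real K * L)^2) / eta"
      by (rule sq_bound)
    then show "(\<Sum>t\<in>ep k. (muT J t k'' i + lam k'' i) * (xT J t k'' i - aT J t k'' i))
      \<le> ((mu1 k'' i)^2 + (real K * L)^2) / eta + eta / 2 * real N"
      using ogd_coord[OF J k, of k'' i "lam k'' i"] k'' by auto
  qed
  have fin: "(\<Sum>k''=k..K. \<Sum>i<m. ((mu1 k'' i)^2 + (real K * L)^2) / eta + eta / 2 * real N)
      \<le> B0 / eta + real K * real m * (eta * real N / 2)"
  proof -
    have "(\<Sum>k''=k..K. \<Sum>i<m. ((mu1 k'' i)^2 + (real K * L)^2) / eta + eta / 2 * real N)
       = (\<Sum>k''=k..K. \<Sum>i<m. (mu1 k'' i)^2 + (real K * L)^2) / eta + real (Suc K - k) * real m * (eta * real N / 2)"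
    proof -
      have "(\<Sum>k''=k..K. \<Sum>i<m. ((mu1 k'' i)^2 + (real K * L)^2) / eta + eta / 2 * real N)
        = (\<Sum>k''=k..K. \<Sum>i<m. ((mu1 k'' i)^2 + (real K * L)^2) / eta) + (\<Sum>k''=k..K. \<Sum>i<m. eta / 2 * real N)"
        by (simp add: sum.distrib)
      moreover have "(\<Sum>k''=k..K. \<Sum>i<m. ((mu1 k'' i)^2 + (real K * L)^2) / eta) = (\<Sum>k''=k..K. \<Sum>i<m. (mu1 k'' i)^2 + (real K * L)^2) / eta"
        by (simp only: sum_divide_distrib)
      moreover have "(\<Sum>k''=k..K. \<Sum>i<m. eta / 2 * real N) = real (Suc K - k) * real m * (eta * real N / 2)"
        by simp
      ultimately show ?thesis by simp
    qed
    also have "(\<Sum>k''=k..K. \<Sum>i<m. (mu1 k'' i)^2 + (real K * L)^2) \<le> (\<Sum>k''=1..K. \<Sum>i<m. (mu1 k'' i)^2 + (real K * L)^2)"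
      using k by (intro sum_mono2) (auto intro!: sum_nonneg)
    also have "real (Suc K - k) * real m * (eta * real N / 2) \<le> real K * real m * (eta * real N / 2)"
      using k etapos by (intro mult_right_mono) auto
    finally show ?thesis using etapos unfolding B0_def by (simp add: divide_right_mono)
  qed
  have G2': "(\<Sum>t\<in>ep k. phi k z (muT J t) - (\<Sum>k''=k..K. \<Sum>i<m. muT J t k'' i * aT J t k'' i))
     = (\<Sum>t\<in>ep k. phi k z (muT J t)) - (\<Sum>t\<in>ep k. \<Sum>k''=k..K. \<Sum>i<m. muT J t k'' i * aT J t k'' i)"
    by (rule sum_subtractf)
  have "proxy_V m n K T c g mu1 eta selX selA J k z \<le> (\<Sum>t\<in>ep k. Dt J k z t (muT J t)) + B0 / eta + real K * real m * (eta * real N / 2)"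
    using V G G2 G2' G3 C Dsum R Rle fin by linarith
  then show ?thesis unfolding z_def .
qed

end

context dgd begin

lemma arr_eq: "real (arrivals_in_epoch K T J k j) = (\<Sum>t\<in>ep k. if J t = j then 1 else 0)"
  unfolding arrivals_in_epoch_def ep_def[symmetric]
  by (simp add: sum.If_cases[OF finite_ep] Int_def conj_commute)

lemma arr_sum:
  assumes "goodJ J" "k \<in> {1..K}"
  shows "(\<Sum>j<n. real (arrivals_in_epoch K T J k j)) = real N"
proof -
  have "(\<Sum>j<n. real (arrivals_in_epoch K T J k j)) = (\<Sum>t\<in>ep k. \<Sum>j<n. if J t = j then 1 else 0)"
    unfolding arr_eq by (rule sum.swap)
  also have "\<dots> = (\<Sum>t\<in>ep k. 1)"
    by (rule sum.cong[OF refl]) (use Jlt[OF assms] in simp)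
  also have "\<dots> = real N" using card_ep[OF assms(2)] by simp
  finally show ?thesis .
qed

lemma sum_by_type:
  assumes "goodJ J" "k \<in> {1..K}"
  shows "(\<Sum>t\<in>ep k. f (J t)) = (\<Sum>j<n. real (arrivals_in_epoch K T J k j) * f j)"
proof -
  have "(\<Sum>j<n. real (arrivals_in_epoch K T J k j) * f j) = (\<Sum>j<n. \<Sum>t\<in>ep k. if J t = j then f j else 0)"
    unfolding arr_eq by (simp add: sum_distrib_right if_distrib[where f="\<lambda>x. x * _"] cong: if_cong)
  also have "\<dots> = (\<Sum>t\<in>ep k. \<Sum>j<n. if J t = j then f j else 0)" by (rule sum.swap)
  also have "\<dots> = (\<Sum>t\<in>ep k. f (J t))"
    by (rule sum.cong[OF refl]) (use Jlt[OF assms] in simp)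
  finally show ?thesis by simp
qed

lemma Z_S:
  assumes "Z \<in> offline_feasible m n K T S J k" "Z k' j i \<noteq> 0"
  shows "k \<le> k' \<and> k' \<le> K \<and> j < n \<and> i \<in> S j"
  using assms unfolding offline_feasible_def by blast

lemma Z_sum:
  assumes "Z \<in> offline_feasible m n K T S J k" "k' \<in> {k..K}" "j < n"
  shows "(\<Sum>i<m. Z k' j i) \<le> arrivals_in_epoch K T J k j"
  using assms unfolding offline_feasible_def by blast

lemma per_kj:
  assumes Z: "Z \<in> offline_feasible m n K T S J k" and k': "k' \<in> {k..K}" and j: "j < n"
  shows "real (arrivals_in_epoch K T J k j) * Qv j (\<lambda>i. c j i - mu k' i)
       \<le> (\<Sum>i<m. (c j i - mu k' i) * real (Z k' j i))"
proof -
  let ?q = "Qv j (\<lambda>i. c j i - mu k' i)"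
  have q0: "?q \<le> 0" using Qv_nonpos[OF j] .
  have h: "real (\<Sum>i<m. Z k' j i) \<le> real (arrivals_in_epoch K T J k j)"
    using Z_sum[OF Z k' j] by (simp only: of_nat_le_iff)
  have "real (arrivals_in_epoch K T J k j) * ?q \<le> real (\<Sum>i<m. Z k' j i) * ?q"
    by (rule mult_right_mono_neg[OF h q0])
  also have "\<dots> = (\<Sum>i<m. real (Z k' j i) * ?q)" by (simp add: sum_distrib_right)
  also have "\<dots> \<le> (\<Sum>i<m. (c j i - mu k' i) * real (Z k' j i))"
  proof (intro sum_mono)
    fix i assume "i \<in> {..<m}"
    show "real (Z k' j i) * ?q \<le> (c j i - mu k' i) * real (Z k' j i)"
    proof (cases "Z k' j i = 0")
      case False
      then have "i \<in> S j" using Z_S[OF Z] by blast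
      then have "?q \<le> c j i - mu k' i" using Qv_le_coord[OF j, of i "\<lambda>i. c j i - mu k' i"] by simp
      then show ?thesis by (metis mult.commute mult_right_mono of_nat_0_le_iff)
    qed simp
  qed
  finally show ?thesis .
qed

theorem off_dual_elem:
  assumes J: "goodJ J" and k: "k \<in> {1..K}" and zb: "\<forall>i<m. 0 \<le> z i \<and> z i \<le> (real k - 1) * real N"
    and Z: "Z \<in> offline_feasible m n K T S J k"
  shows "(\<Sum>t\<in>ep k. Dt J k z t mu) \<le> offline_obj m n K T c g k z Z"
proof -
  define ZR where "ZR k' j i = real (Z k' j i)" for k' j i
  define b where "b k'' i = (if k \<le> k'' \<and> k'' \<le> K then (\<Sum>j<n. ZR k'' j i) / real N else 0)" for k'' i
  have Npos: "real N > 0" using N_pos by simp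
  have b_box: "b \<in> unit_box"
  proof -
    have "0 \<le> b k'' i \<and> b k'' i \<le> 1" for k'' i
    proof (cases "k \<le> k'' \<and> k'' \<le> K")
      case True
      have le: "(\<Sum>j<n. ZR k'' j i) \<le> (\<Sum>j<n. real (arrivals_in_epoch K T J k j))"
      proof (intro sum_mono)
        fix j assume j: "j \<in> {..<n}"
        show "ZR k'' j i \<le> real (arrivals_in_epoch K T J k j)"
        proof (cases "Z k'' j i = 0")
          case False
          then have "i \<in> S j" using Z_S[OF Z] by blast
          then have im: "i < m" using S_sub j by auto
          have "Z k'' j i \<le> (\<Sum>i'<m. Z k'' j i')"
            using im by (intro member_le_sum) auto
          also have "\<dots> \<le> arrivals_in_epoch K T J k j" using Z_sum[OF Z _ ] True j by auto
          finally show ?thesis unfolding ZR_def by simp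
        qed (simp add: ZR_def)
      qed
      have "0 \<le> (\<Sum>j<n. ZR k'' j i)" unfolding ZR_def by (intro sum_nonneg) auto
      moreover have "(\<Sum>j<n. ZR k'' j i) \<le> real N" using le arr_sum[OF J k] by simp
      ultimately show ?thesis using True Npos unfolding b_def by (simp add: divide_le_eq)
    qed (auto simp: b_def)
    then show ?thesis by (simp add: unit_box_def)
  qed
  have sb: "(\<Sum>k''=k..k'. b k'' i) = (\<Sum>j<n. \<Sum>k''=k..k'. ZR k'' j i) / real N" if "k' \<le> K" for k' i
  proof -
    have "(\<Sum>k''=k..k'. b k'' i) = (\<Sum>k''=k..k'. (\<Sum>j<n. ZR k'' j i) / real N)"
      using that by (intro sum.cong) (auto simp: b_def)
    also have "\<dots> = (\<Sum>j<n. \<Sum>k''=k..k'. ZR k'' j i) / real N"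
      by (simp add: sum_divide_distrib[symmetric] sum.swap[of _ "{k..k'}"])
    finally show ?thesis .
  qed
  have aob: "real N * a_objective m K T g k z mu b
     = (\<Sum>k'=k..K. \<Sum>i<m. real N * (real k' * g k' i ((z i + (\<Sum>j<n. \<Sum>k''=k..k'. ZR k'' j i)) / (real k' * real N))))
       + (\<Sum>k'=k..K. \<Sum>i<m. mu k' i * (\<Sum>j<n. ZR k' j i))"
  proof -
    have arg: "z i / (real k' * real N) + (\<Sum>k''=k..k'. b k'' i) / real k'
        = (z i + (\<Sum>j<n. \<Sum>k''=k..k'. ZR k'' j i)) / (real k' * real N)" if "k' \<in> {k..K}" for k' i
      using sb[of k' i] that Npos k by (simp add: field_simps)
    have p1: "real N * (\<Sum>k'=k..K. real k' * (\<Sum>i<m. g k' i (z i / (real k' * real N) + (\<Sum>k''=k..k'. b k'' i) / real k')))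
        = (\<Sum>k'=k..K. \<Sum>i<m. real N * (real k' * g k' i ((z i + (\<Sum>j<n. \<Sum>k''=k..k'. ZR k'' j i)) / (real k' * real N))))"
      unfolding sum_distrib_left by (intro sum.cong refl) (simp add: arg sum_distrib_left)
    have p2: "real N * (\<Sum>k'=k..K. \<Sum>i<m. mu k' i * b k' i) = (\<Sum>k'=k..K. \<Sum>i<m. mu k' i * (\<Sum>j<n. ZR k' j i))"
    proof -
      have "real N * (\<Sum>k'=k..K. \<Sum>i<m. mu k' i * b k' i) = (\<Sum>k'=k..K. \<Sum>i<m. real N * (mu k' i * b k' i))"
        by (simp add: sum_distrib_left)
      also have "\<dots> = (\<Sum>k'=k..K. \<Sum>i<m. mu k' i * (\<Sum>j<n. ZR k' j i))"
        by (intro sum.cong refl) (use Npos in \<open>simp add: b_def\<close>)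
      finally show ?thesis .
    qed
    show ?thesis unfolding a_objective_def kTK distrib_left p1 p2 ..
  qed
  have OO: "offline_obj m n K T c g k z Z
     = (\<Sum>j<n. \<Sum>i<m. c j i * (\<Sum>k'=k..K. ZR k' j i))
       + (\<Sum>k'=k..K. \<Sum>i<m. real N * (real k' * g k' i ((z i + (\<Sum>j<n. \<Sum>k''=k..k'. ZR k'' j i)) / (real k' * real N))))"
    unfolding offline_obj_def kTK TK ZR_def by (simp add: sum_distrib_left)
  have C2: "(\<Sum>j<n. \<Sum>i<m. c j i * (\<Sum>k'=k..K. ZR k' j i))
     = (\<Sum>k'=k..K. \<Sum>j<n. \<Sum>i<m. (c j i - mu k' i) * ZR k' j i) + (\<Sum>k'=k..K. \<Sum>i<m. mu k' i * (\<Sum>j<n. ZR k' j i))"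
  proof -
    have "(\<Sum>j<n. \<Sum>i<m. c j i * (\<Sum>k'=k..K. ZR k' j i)) = (\<Sum>k'=k..K. \<Sum>j<n. \<Sum>i<m. c j i * ZR k' j i)"
      by (simp add: sum_distrib_left sum.swap[of _ "{k..K}"])
    also have "\<dots> = (\<Sum>k'=k..K. \<Sum>j<n. \<Sum>i<m. (c j i - mu k' i) * ZR k' j i + mu k' i * ZR k' j i)"
      by (simp add: algebra_simps)
    also have "\<dots> = (\<Sum>k'=k..K. \<Sum>j<n. \<Sum>i<m. (c j i - mu k' i) * ZR k' j i) + (\<Sum>k'=k..K. \<Sum>j<n. \<Sum>i<m. mu k' i * ZR k' j i)"
      by (simp add: sum.distrib)
    also have "(\<Sum>k'=k..K. \<Sum>j<n. \<Sum>i<m. mu k' i * ZR k' j i) = (\<Sum>k'=k..K. \<Sum>i<m. mu k' i * (\<Sum>j<n. ZR k' j i))"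
      by (rule sum.cong[OF refl]) (simp add: sum_distrib_left sum.swap[of _ "{..<n}"])
    finally show ?thesis .
  qed
  have C3: "(\<Sum>k'=k..K. \<Sum>j<n. real (arrivals_in_epoch K T J k j) * Qv j (\<lambda>i. c j i - mu k' i))
     \<le> (\<Sum>k'=k..K. \<Sum>j<n. \<Sum>i<m. (c j i - mu k' i) * ZR k' j i)"
    unfolding ZR_def by (intro sum_mono per_kj[OF Z]) auto
  have C4: "(\<Sum>k'=k..K. \<Sum>j<n. real (arrivals_in_epoch K T J k j) * Qv j (\<lambda>i. c j i - mu k' i))
     = (\<Sum>t\<in>ep k. \<Sum>k'=k..K. Qv (J t) (\<lambda>i. c (J t) i - mu k' i))"
  proof -
    have "(\<Sum>t\<in>ep k. \<Sum>k'=k..K. Qv (J t) (\<lambda>i. c (J t) i - mu k' i))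
        = (\<Sum>j<n. real (arrivals_in_epoch K T J k j) * (\<Sum>k'=k..K. Qv j (\<lambda>i. c j i - mu k' i)))"
      by (rule sum_by_type[OF J k])
    also have "\<dots> = (\<Sum>j<n. \<Sum>k'=k..K. real (arrivals_in_epoch K T J k j) * Qv j (\<lambda>i. c j i - mu k' i))"
      by (simp add: sum_distrib_left)
    also have "\<dots> = (\<Sum>k'=k..K. \<Sum>j<n. real (arrivals_in_epoch K T J k j) * Qv j (\<lambda>i. c j i - mu k' i))"
      by (rule sum.swap)
    finally show ?thesis by simp
  qed
  have C5: "phi k z mu \<le> a_objective m K T g k z mu b" by (rule phi_le[OF k zb b_box])
  have D: "(\<Sum>t\<in>ep k. Dt J k z t mu) = (\<Sum>t\<in>ep k. \<Sum>k'=k..K. Qv (J t) (\<lambda>i. c (J t) i - mu k' i)) + real N * phi k z mu"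
    unfolding Dt_def using card_ep[OF k] by (simp add: sum.distrib)
  have "real N * phi k z mu \<le> real N * a_objective m K T g k z mu b"
    using C5 Npos by simp
  then show ?thesis using OO C2 C3 C4 D aob by linarith
qed

lemma feas_ne: "(\<lambda>_ _ _. 0) \<in> offline_feasible m n K T S J k"
  by (simp add: offline_feasible_def)

theorem off_dual:
  assumes J: "goodJ J" and k: "k \<in> {1..K}" and zb: "\<forall>i<m. 0 \<le> z i \<and> z i \<le> (real k - 1) * real N"
  shows "(\<Sum>t\<in>ep k. Dt J k z t mu) \<le> proxy_off m n K T c S g J k z"
  unfolding proxy_off_def
proof (rule cInf_greatest)
  show "offline_obj m n K T c g k z ` offline_feasible m n K T S J k \<noteq> {}" using feas_ne by blast
  fix v assume "v \<in> offline_obj m n K T c g k z ` offline_feasible m n K T S J k"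
  then obtain Z where Z: "Z \<in> offline_feasible m n K T S J k" and v: "v = offline_obj m n K T c g k z Z" by auto
  show "(\<Sum>t\<in>ep k. Dt J k z t mu) \<le> v" unfolding v by (rule off_dual_elem[OF J k zb Z])
qed

end

context dgd begin

lemma xT_01':
  assumes J: "goodJ J" and k: "k \<in> {1..K}" and t: "t \<in> ep k"
  shows "xT J t k'' i = 0 \<or> xT J t k'' i = 1"
proof -
  have "t \<in> {1..T}" using ep_sub[OF k] t by auto
  from xT_feas[OF J this, of k''] show ?thesis unfolding feasX_def by auto
qed

definition "Zp J k k'' j i = (if k \<le> k'' \<and> k'' \<le> K \<and> j < n \<and> i \<in> S j
     then card {t\<in>ep k. J t = j \<and> xT J t k'' i = 1} else 0)"

lemma Zp_real:
  assumes J: "goodJ J" and k: "k \<in> {1..K}" and k'': "k'' \<in> {k..K}"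
  shows "real (Zp J k k'' j i) = (\<Sum>t\<in>ep k. if J t = j then xT J t k'' i else 0)"
proof (cases "j < n \<and> i \<in> S j")
  case True
  have "real (card {t\<in>ep k. J t = j \<and> xT J t k'' i = 1}) = (\<Sum>t\<in>ep k. if J t = j \<and> xT J t k'' i = 1 then 1 else 0)"
    by (simp add: sum.If_cases[OF finite_ep] Int_def)
  also have "\<dots> = (\<Sum>t\<in>ep k. if J t = j then xT J t k'' i else 0)"
    by (rule sum.cong[OF refl]) (use xT_01'[OF J k] in auto)
  finally show ?thesis using True k'' by (simp add: Zp_def)
next
  case False
  have "(\<Sum>t\<in>ep k. if J t = j then xT J t k'' i else (0::real)) = 0"
  proof (rule sum.neutral, rule ballI)
    fix t assume t: "t \<in> ep k"
    show "(if J t = j then xT J t k'' i else 0) = 0"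
    proof (cases "J t = j")
      case True
      then have "i \<notin> S j" using False Jlt[OF J k t] by auto
      then show ?thesis using True feasX_out[OF xT_feas[OF J, of t k'']] ep_sub[OF k] t by auto
    qed simp
  qed
  moreover have "Zp J k k'' j i = 0" using False unfolding Zp_def by auto
  ultimately show ?thesis by simp
qed

lemma Zp_feas:
  assumes J: "goodJ J" and k: "k \<in> {1..K}"
  shows "Zp J k \<in> offline_feasible m n K T S J k"
  unfolding offline_feasible_def mem_Collect_eq
proof (intro conjI)
  show "\<forall>k' j i. Zp J k k' j i \<noteq> 0 \<longrightarrow> k \<le> k' \<and> k' \<le> K \<and> j < n \<and> i \<in> S j"
    by (auto simp: Zp_def split: if_splits)
  show "\<forall>k'\<in>{k..K}. \<forall>j<n. (\<Sum>i<m. Zp J k k' j i) \<le> arrivals_in_epoch K T J k j"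
  proof (intro ballI allI impI)
  fix k' j assume k': "k' \<in> {k..K}" and j: "j < n"
  have "real (\<Sum>i<m. Zp J k k' j i) = (\<Sum>i<m. \<Sum>t\<in>ep k. if J t = j then xT J t k' i else 0)"
    using Zp_real[OF J k k'] by simp
  also have "\<dots> = (\<Sum>t\<in>ep k. if J t = j then (\<Sum>i<m. xT J t k' i) else 0)"
    by (subst sum.swap) (rule sum.cong[OF refl], simp)
  also have "\<dots> \<le> (\<Sum>t\<in>ep k. if J t = j then 1 else 0)"
  proof (intro sum_mono)
    fix t assume t: "t \<in> ep k"
    show "(if J t = j then (\<Sum>i<m. xT J t k' i) else 0) \<le> (if J t = j then 1 else (0::real))"
      using feasX_sum[OF xT_feas[OF J, of t k']] ep_sub[OF k] t by auto
  qed
  also have "\<dots> = real (arrivals_in_epoch K T J k j)" by (rule arr_eq[symmetric])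
  finally show "(\<Sum>i<m. Zp J k k' j i) \<le> arrivals_in_epoch K T J k j" by linarith
  qed
qed

lemma proxy_Z_Zp:
  assumes J: "goodJ J" and k: "k \<in> {1..K}" and k2: "k2 \<le> K"
  shows "proxy_Z m K T c g mu1 eta selX selA J k k k2 j i = (\<Sum>k''=k..k2. real (Zp J k k'' j i))"
proof -
  have "proxy_Z m K T c g mu1 eta selX selA J k k k2 j i = (\<Sum>k''=k..k2. \<Sum>t\<in>ep k. if J t = j then xT J t k'' i else 0)"
    unfolding proxy_Z_eq by (rule sum.swap)
  also have "\<dots> = (\<Sum>k''=k..k2. real (Zp J k k'' j i))"
    by (rule sum.cong[OF refl]) (use Zp_real[OF J k] k2 in auto)
  finally show ?thesis .
qed

theorem off_le_V:
  assumes J: "goodJ J" and k: "k \<in> {1..K}" and zb: "\<forall>i<m. 0 \<le> z i \<and> z i \<le> (real k - 1) * real N"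
  shows "proxy_off m n K T c S g J k z \<le> proxy_V m n K T c g mu1 eta selX selA J k z"
proof -
  have eq: "offline_obj m n K T c g k z (Zp J k) = proxy_V m n K T c g mu1 eta selX selA J k z"
    unfolding offline_obj_def proxy_V_def using proxy_Z_Zp[OF J k]
    by (intro arg_cong2[where f="(+)"] sum.cong refl arg_cong2[where f="(*)"]) (auto intro!: sum.cong)
  have bdd: "bdd_below (offline_obj m n K T c g k z ` offline_feasible m n K T S J k)"
    unfolding bdd_below_def using off_dual_elem[OF J k zb, of _ "\<lambda>_ _. 0"] by blast
  have "proxy_off m n K T c S g J k z \<le> offline_obj m n K T c g k z (Zp J k)"
    unfolding proxy_off_def by (rule cInf_lower[OF imageI[OF Zp_feas[OF J k]] bdd])
  then show ?thesis using eq by simp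
qed

end

lemma finite_Pi_pmf_set:
  assumes "finite A" "finite (set_pmf P)"
  shows "finite (set_pmf (Pi_pmf A d (\<lambda>_. P)))"
  by (rule finite_subset[OF set_Pi_pmf_subset'[OF assms(1)]]) (use assms in auto)

lemma pair_iter:
  fixes h :: "'a \<times> 'b \<Rightarrow> real"
  assumes fA: "finite (set_pmf A)" and fB: "finite (set_pmf B)"
  shows "measure_pmf.expectation (pair_pmf A B) h
       = measure_pmf.expectation B (\<lambda>b. measure_pmf.expectation A (\<lambda>a. h (a, b)))"
proof -
  have "measure_pmf.expectation (pair_pmf A B) h = (\<Sum>p\<in>set_pmf A \<times> set_pmf B. h p * pmf (pair_pmf A B) p)"
    by (rule integral_measure_pmf_real) (use fA fB in auto)
  also have "\<dots> = (\<Sum>b\<in>set_pmf B. \<Sum>a\<in>set_pmf A. h (a, b) * (pmf A a * pmf B b))"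
    by (subst sum.cartesian_product', subst sum.swap) (simp add: pmf_pair)
  also have "\<dots> = (\<Sum>b\<in>set_pmf B. (\<Sum>a\<in>set_pmf A. h (a, b) * pmf A a) * pmf B b)"
    by (simp add: sum_distrib_right mult.assoc)
  also have "\<dots> = measure_pmf.expectation B (\<lambda>b. measure_pmf.expectation A (\<lambda>a. h (a, b)))"
  proof -
    have "measure_pmf.expectation A (\<lambda>a. h (a, b)) = (\<Sum>a\<in>set_pmf A. h (a, b) * pmf A a)" for b
      by (rule integral_measure_pmf_real) (use fA in auto)
    moreover have "measure_pmf.expectation B (\<lambda>b. measure_pmf.expectation A (\<lambda>a. h (a, b)))
        = (\<Sum>b\<in>set_pmf B. measure_pmf.expectation A (\<lambda>a. h (a, b)) * pmf B b)"
      by (rule integral_measure_pmf_real) (use fB in auto)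
    ultimately show ?thesis by simp
  qed
  finally show ?thesis .
qed

lemma expectation_const_pmf: "measure_pmf.expectation M (\<lambda>_. (c::real)) = c"
  by simp

lemma indep_coord:
  fixes P :: "nat pmf" and F :: "(nat \<Rightarrow> nat) \<Rightarrow> 'b" and G :: "nat \<Rightarrow> 'b \<Rightarrow> real"
  assumes t: "t \<in> {1..T}" and fP: "finite (set_pmf P)"
    and Finv: "\<And>J y. F (J(t := y)) = F J"
  shows "measure_pmf.expectation (Pi_pmf {1..T} 0 (\<lambda>_. P)) (\<lambda>J. G (J t) (F J))
       = measure_pmf.expectation (Pi_pmf {1..T} 0 (\<lambda>_. P)) (\<lambda>J. measure_pmf.expectation P (\<lambda>y. G y (F J)))"
proof -
  define A where "A = {1..T} - {t}"
  have ins: "{1..T} = insert t A" "finite A" "t \<notin> A" using t by (auto simp: A_def)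
  define Q where "Q = Pi_pmf A 0 (\<lambda>_. P)"
  have fQ: "finite (set_pmf Q)" unfolding Q_def by (rule finite_Pi_pmf_set[OF ins(2) fP])
  have PJ: "Pi_pmf {1..T} 0 (\<lambda>_. P) = map_pmf (\<lambda>(y, f). f(t := y)) (pair_pmf P Q)"
    unfolding ins(1) Q_def by (rule Pi_pmf_insert[OF ins(2,3)])
  have "measure_pmf.expectation (Pi_pmf {1..T} 0 (\<lambda>_. P)) (\<lambda>J. G (J t) (F J))
      = measure_pmf.expectation (pair_pmf P Q) (\<lambda>p. G (fst p) (F (snd p)))"
    unfolding PJ by (simp add: case_prod_unfold Finv)
  also have "\<dots> = measure_pmf.expectation Q (\<lambda>f. measure_pmf.expectation P (\<lambda>y. G y (F f)))"
    by (subst pair_iter[OF fP fQ]) simp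
  also have "\<dots> = measure_pmf.expectation (pair_pmf P Q) (\<lambda>p. measure_pmf.expectation P (\<lambda>y. G y (F (snd p))))"
    by (subst pair_iter[OF fP fQ]) simp
  also have "\<dots> = measure_pmf.expectation (Pi_pmf {1..T} 0 (\<lambda>_. P)) (\<lambda>J. measure_pmf.expectation P (\<lambda>y. G y (F J)))"
    unfolding PJ by (simp add: case_prod_unfold Finv)
  finally show ?thesis .
qed

locale dgdP = dgd +
  fixes P :: "nat pmf"
  assumes P_supp: "set_pmf P \<subseteq> {..<n}"
begin

abbreviation "PJ \<equiv> Pi_pmf {1..T} 0 (\<lambda>_. P)"

lemma fP: "finite (set_pmf P)"
  using P_supp finite_subset by blast

lemma fPJ: "finite (set_pmf PJ)"
  by (rule finite_Pi_pmf_set[OF _ fP]) simp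

lemma integ: "integrable (measure_pmf PJ) (f :: _ \<Rightarrow> real)"
  by (rule integrable_measure_pmf_finite[OF fPJ])

lemma integP: "integrable (measure_pmf P) (f :: _ \<Rightarrow> real)"
  by (rule integrable_measure_pmf_finite[OF fP])

lemma good_supp: "J \<in> set_pmf PJ \<Longrightarrow> goodJ J"
proof -
  assume J: "J \<in> set_pmf PJ"
  have "J \<in> PiE_dflt {1..T} 0 (set_pmf \<circ> (\<lambda>_. P))"
    using set_Pi_pmf_subset'[of "{1..T}" 0 "\<lambda>_. P"] J by auto
  then show "goodJ J" using P_supp unfolding goodJ_def PiE_dflt_def by auto
qed

lemma zz_inv:
  assumes k: "k \<in> {1..K}" and t: "t \<in> ep k"
  shows "zz (J(t := y)) k = zz J k"
proof -
  have "st (J(t := y)) ((k - 1) * N) = st J ((k - 1) * N)"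
    by (rule st_dep) (use t in \<open>auto simp: ep_eq\<close>)
  then show ?thesis unfolding zz_def using U_usage by (metis ext)
qed

lemma muT_inv:
  assumes k: "k \<in> {1..K}" and t: "t \<in> ep k"
  shows "muT (J(t := y)) t = muT J t"
proof -
  obtain t' where t': "t = Suc t'" using ep_pos[OF k t] by (cases t) auto
  have "st (J(t := y)) t' = st J t'" by (rule st_dep) (use t' in auto)
  then show ?thesis unfolding t' muT_eq by (simp cong: if_cong)
qed

definition "Dbar k z mu = measure_pmf.expectation P (\<lambda>y. (\<Sum>k''=k..K. Qv y (\<lambda>i. c y i - mu k'' i)) + phi k z mu)"

lemma E_Dt:
  assumes k: "k \<in> {1..K}" and t: "t \<in> ep k" and Minv: "\<And>J y. Mf (J(t := y)) = Mf J"
  shows "measure_pmf.expectation PJ (\<lambda>J. Dt J k (zz J k) t (Mf J))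
       = measure_pmf.expectation PJ (\<lambda>J. Dbar k (zz J k) (Mf J))"
proof -
  have tT: "t \<in> {1..T}" using ep_sub[OF k] t by auto
  define F where "F J = (zz J k, Mf J)" for J
  define G where "G y p = (\<Sum>k''=k..K. Qv y (\<lambda>i. c y i - snd p k'' i)) + phi k (fst p) (snd p)" for y p
  have inv: "F (J(t := y)) = F J" for J y unfolding F_def by (simp add: zz_inv[OF k t] Minv)
  have e: "measure_pmf.expectation PJ (\<lambda>J. G (J t) (F J)) = measure_pmf.expectation PJ (\<lambda>J. measure_pmf.expectation P (\<lambda>y. G y (F J)))"
    by (rule indep_coord[OF tT fP inv])
  have l: "(\<lambda>J. G (J t) (F J)) = (\<lambda>J. Dt J k (zz J k) t (Mf J))" unfolding F_def G_def Dt_def by simp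
  have r: "(\<lambda>J. measure_pmf.expectation P (\<lambda>y. G y (F J))) = (\<lambda>J. Dbar k (zz J k) (Mf J))" unfolding F_def G_def Dbar_def by simp
  show ?thesis using e unfolding l r .
qed

definition "A0 k z = a_objective m K T g k z (\<lambda>_ _. 0) (\<lambda>_ _. 0)"

lemma zero_box: "(\<lambda>_ _. 0) \<in> unit_box" by (simp add: unit_box_def)

lemma Dbar_le:
  assumes k: "k \<in> {1..K}" and zb: "\<forall>i<m. 0 \<le> z i \<and> z i \<le> (real k - 1) * real N"
  shows "Dbar k z mu \<le> A0 k z"
proof -
  have ph: "phi k z mu \<le> A0 k z"
    using phi_le[OF k zb zero_box, of mu] by (simp add: A0_def a_objective_def)
  have "Dbar k z mu \<le> measure_pmf.expectation P (\<lambda>y. A0 k z)"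
    unfolding Dbar_def
  proof (rule integral_mono_AE[OF integP integP])
    show "AE y in measure_pmf P. (\<Sum>k''=k..K. Qv y (\<lambda>i. c y i - mu k'' i)) + phi k z mu \<le> A0 k z"
      unfolding AE_measure_pmf_iff
    proof
      fix y assume "y \<in> set_pmf P"
      then have y: "y < n" using P_supp by auto
      have "(\<Sum>k''=k..K. Qv y (\<lambda>i. c y i - mu k'' i)) \<le> 0"
        using Qv_nonpos[OF y] by (intro sum_nonpos) auto
      then show "(\<Sum>k''=k..K. Qv y (\<lambda>i. c y i - mu k'' i)) + phi k z mu \<le> A0 k z" using ph by linarith
    qed
  qed
  then show ?thesis by simp
qed

definition "SupD k z = (SUP mu. Dbar k z mu)"

lemma Dbar_le_Sup:
  assumes k: "k \<in> {1..K}" and zb: "\<forall>i<m. 0 \<le> z i \<and> z i \<le> (real k - 1) * real N"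
  shows "Dbar k z mu \<le> SupD k z"
  unfolding SupD_def
  by (rule cSUP_upper) (use Dbar_le[OF k zb] in \<open>auto simp: bdd_above_def\<close>)

lemma Sup_approx:
  assumes k: "k \<in> {1..K}" and zb: "\<forall>i<m. 0 \<le> z i \<and> z i \<le> (real k - 1) * real N" and e: "0 < e"
  shows "\<exists>mu. SupD k z - e < Dbar k z mu"
proof (rule ccontr)
  assume "\<not> (\<exists>mu. SupD k z - e < Dbar k z mu)"
  then have h: "Dbar k z mu \<le> SupD k z - e" for mu by (meson not_less)
  have "(SUP mu. Dbar k z mu) \<le> SupD k z - e" by (rule cSUP_least) (auto intro: h)
  then have "SupD k z \<le> SupD k z - e" by (simp add: SupD_def)
  then show False using e by simp
qed

definition "Me k e z = (SOME mu. SupD k z - e < Dbar k z mu)"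

lemma Me_prop:
  assumes k: "k \<in> {1..K}" and zb: "\<forall>i<m. 0 \<le> z i \<and> z i \<le> (real k - 1) * real N" and e: "0 < e"
  shows "SupD k z - e < Dbar k z (Me k e z)"
  unfolding Me_def using someI_ex[OF Sup_approx[OF k zb e]] .

lemma zz_good: "J \<in> set_pmf PJ \<Longrightarrow> k \<in> {1..K} \<Longrightarrow> \<forall>i<m. 0 \<le> zz J k i \<and> zz J k i \<le> (real k - 1) * real N"
  using zz_bounds good_supp by blast

lemma E_Dt_le_off:
  assumes k: "k \<in> {1..K}" and e: "0 < e"
  shows "measure_pmf.expectation PJ (\<lambda>J. \<Sum>t\<in>ep k. Dt J k (zz J k) t (muT J t))
      \<le> measure_pmf.expectation PJ (\<lambda>J. proxy_off m n K T c S g J k (zz J k)) + real N * e"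
proof -
  have "measure_pmf.expectation PJ (\<lambda>J. \<Sum>t\<in>ep k. Dt J k (zz J k) t (muT J t))
      = (\<Sum>t\<in>ep k. measure_pmf.expectation PJ (\<lambda>J. Dt J k (zz J k) t (muT J t)))"
    by (rule Bochner_Integration.integral_sum) (rule integ)
  also have "\<dots> = (\<Sum>t\<in>ep k. measure_pmf.expectation PJ (\<lambda>J. Dbar k (zz J k) (muT J t)))"
    by (rule sum.cong[OF refl]) (rule E_Dt[OF k], auto intro: muT_inv[OF k])
  also have "\<dots> \<le> (\<Sum>t\<in>ep k. measure_pmf.expectation PJ (\<lambda>J. Dbar k (zz J k) (Me k e (zz J k)) + e))"
  proof (rule sum_mono, rule integral_mono_AE[OF integ integ])
    fix t assume "t \<in> ep k"
    show "AE J in measure_pmf PJ. Dbar k (zz J k) (muT J t) \<le> Dbar k (zz J k) (Me k e (zz J k)) + e"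
      unfolding AE_measure_pmf_iff
    proof
      fix J assume J: "J \<in> set_pmf PJ"
      have "Dbar k (zz J k) (muT J t) \<le> SupD k (zz J k)" by (rule Dbar_le_Sup[OF k zz_good[OF J k]])
      moreover have "SupD k (zz J k) - e < Dbar k (zz J k) (Me k e (zz J k))" by (rule Me_prop[OF k zz_good[OF J k] e])
      ultimately show "Dbar k (zz J k) (muT J t) \<le> Dbar k (zz J k) (Me k e (zz J k)) + e" by linarith
    qed
  qed
  also have "\<dots> = (\<Sum>t\<in>ep k. measure_pmf.expectation PJ (\<lambda>J. Dbar k (zz J k) (Me k e (zz J k))) + e)"
    by (rule sum.cong[OF refl]) (subst Bochner_Integration.integral_add[OF integ integ], simp)
  also have "\<dots> = (\<Sum>t\<in>ep k. measure_pmf.expectation PJ (\<lambda>J. Dt J k (zz J k) t (Me k e (zz J k))) + e)"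
    by (rule sum.cong[OF refl]) (subst E_Dt[OF k], auto simp: zz_inv[OF k])
  also have "\<dots> = measure_pmf.expectation PJ (\<lambda>J. \<Sum>t\<in>ep k. Dt J k (zz J k) t (Me k e (zz J k))) + real N * e"
  proof -
    have s: "measure_pmf.expectation PJ (\<lambda>J. \<Sum>t\<in>ep k. Dt J k (zz J k) t (Me k e (zz J k)))
       = (\<Sum>t\<in>ep k. measure_pmf.expectation PJ (\<lambda>J. Dt J k (zz J k) t (Me k e (zz J k))))"
      by (rule Bochner_Integration.integral_sum) (rule integ)
    show ?thesis unfolding s by (simp add: sum.distrib card_ep[OF k])
  qed
  also have "\<dots> \<le> measure_pmf.expectation PJ (\<lambda>J. proxy_off m n K T c S g J k (zz J k)) + real N * e"
  proof -
    have "measure_pmf.expectation PJ (\<lambda>J. \<Sum>t\<in>ep k. Dt J k (zz J k) t (Me k e (zz J k)))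
        \<le> measure_pmf.expectation PJ (\<lambda>J. proxy_off m n K T c S g J k (zz J k))"
    proof (rule integral_mono_AE[OF integ integ])
      show "AE J in measure_pmf PJ. (\<Sum>t\<in>ep k. Dt J k (zz J k) t (Me k e (zz J k))) \<le> proxy_off m n K T c S g J k (zz J k)"
        unfolding AE_measure_pmf_iff
      proof
        fix J assume J: "J \<in> set_pmf PJ"
        show "(\<Sum>t\<in>ep k. Dt J k (zz J k) t (Me k e (zz J k))) \<le> proxy_off m n K T c S g J k (zz J k)"
          by (rule off_dual[OF good_supp[OF J] k zz_good[OF J k]])
      qed
    qed
    then show ?thesis by simp
  qed
  finally show ?thesis .
qed

theorem E_regret:
  assumes k: "k \<in> {1..K}"
  shows "0 \<le> expected_proxy_regret m n K T c S g mu1 eta selX selA P k \<and>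
         expected_proxy_regret m n K T c S g mu1 eta selX selA P k \<le> B0 / eta + real K * real m * (eta * real N / 2)"
proof -
  have reg: "proxy_regret m n K T c S g mu1 eta selX selA J k
      = proxy_V m n K T c g mu1 eta selX selA J k (zz J k) - proxy_off m n K T c S g J k (zz J k)" for J
    by (simp add: proxy_regret_def zz_def Let_def)
  have E: "expected_proxy_regret m n K T c S g mu1 eta selX selA P k
      = measure_pmf.expectation PJ (\<lambda>J. proxy_V m n K T c g mu1 eta selX selA J k (zz J k) - proxy_off m n K T c S g J k (zz J k))"
    by (simp add: expected_proxy_regret_def reg)
  have nonneg: "0 \<le> expected_proxy_regret m n K T c S g mu1 eta selX selA P k"
    unfolding E
  proof (rule integral_nonneg_AE)
    show "AE J in measure_pmf PJ. 0 \<le> proxy_V m n K T c g mu1 eta selX selA J k (zz J k) - proxy_off m n K T c S g J k (zz J k)"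
      unfolding AE_measure_pmf_iff
    proof
      fix J assume J: "J \<in> set_pmf PJ"
      have "proxy_off m n K T c S g J k (zz J k) \<le> proxy_V m n K T c g mu1 eta selX selA J k (zz J k)"
        by (rule off_le_V[OF good_supp[OF J] k zz_good[OF J k]])
      then show "0 \<le> proxy_V m n K T c g mu1 eta selX selA J k (zz J k) - proxy_off m n K T c S g J k (zz J k)" by simp
    qed
  qed
  define Bd where "Bd = B0 / eta + real K * real m * (eta * real N / 2)"
  have up: "expected_proxy_regret m n K T c S g mu1 eta selX selA P k \<le> Bd + real N * e" if e: "0 < e" for e
  proof -
    have "expected_proxy_regret m n K T c S g mu1 eta selX selA P k
        \<le> measure_pmf.expectation PJ (\<lambda>J. (\<Sum>t\<in>ep k. Dt J k (zz J k) t (muT J t)) + Bd - proxy_off m n K T c S g J k (zz J k))"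
      unfolding E
    proof (rule integral_mono_AE[OF integ integ])
      show "AE J in measure_pmf PJ. proxy_V m n K T c g mu1 eta selX selA J k (zz J k) - proxy_off m n K T c S g J k (zz J k)
          \<le> (\<Sum>t\<in>ep k. Dt J k (zz J k) t (muT J t)) + Bd - proxy_off m n K T c S g J k (zz J k)"
        unfolding AE_measure_pmf_iff
      proof
        fix J assume J: "J \<in> set_pmf PJ"
        have "proxy_V m n K T c g mu1 eta selX selA J k (zz J k) \<le> (\<Sum>t\<in>ep k. Dt J k (zz J k) t (muT J t)) + Bd"
          using V_upper[OF good_supp[OF J] k] unfolding Bd_def by linarith
        then show "proxy_V m n K T c g mu1 eta selX selA J k (zz J k) - proxy_off m n K T c S g J k (zz J k)
          \<le> (\<Sum>t\<in>ep k. Dt J k (zz J k) t (muT J t)) + Bd - proxy_off m n K T c S g J k (zz J k)" by linarith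
      qed
    qed
    also have "\<dots> = measure_pmf.expectation PJ (\<lambda>J. \<Sum>t\<in>ep k. Dt J k (zz J k) t (muT J t)) + Bd
        - measure_pmf.expectation PJ (\<lambda>J. proxy_off m n K T c S g J k (zz J k))"
      by (subst Bochner_Integration.integral_diff[OF integ integ], subst Bochner_Integration.integral_add[OF integ integ]) simp
    also have "\<dots> \<le> Bd + real N * e" using E_Dt_le_off[OF k e] by linarith
    finally show ?thesis .
  qed
  have "expected_proxy_regret m n K T c S g mu1 eta selX selA P k \<le> Bd"
  proof (rule field_le_epsilon)
    fix e :: real assume e: "0 < e"
    have Npos: "0 < real N" using N_pos by simp
    have "0 < e / real N" using e Npos by simp
    from up[OF this] show "expected_proxy_regret m n K T c S g mu1 eta selX selA P k \<le> Bd + e"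
      using Npos by simp
  qed
  then show ?thesis using nonneg unfolding Bd_def by simp
qed

end

theorem lemma4:
  fixes m n K :: nat and c :: "nat \<Rightarrow> nat \<Rightarrow> real" and S :: "nat \<Rightarrow> nat set"
    and P :: "nat pmf" and \<rho> :: "nat \<Rightarrow> nat \<Rightarrow> real" and g :: "nat \<Rightarrow> nat \<Rightarrow> real \<Rightarrow> real"
    and L :: real and mu1 :: "nat \<Rightarrow> nat \<Rightarrow> real" and eta :: "nat \<Rightarrow> real" and c1 c2 :: real
  assumes K_pos: "K \<ge> 1"
    and S_sub: "\<forall>j<n. S j \<subseteq> {..<m}"
    and P_supp: "set_pmf P \<subseteq> {..<n}"
    and g_props: "\<forall>k\<in>{1..K}. \<forall>i<m. \<rho> k i \<in> {0..1} \<and> convex_on {0..1} (g k i)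
                    \<and> L-lipschitz_on {0..1} (g k i) \<and> (\<forall>x\<in>{0..1}. 0 \<le> g k i x) \<and> g k i (\<rho> k i) = 0"
    and c1_pos: "0 < c1" and c12: "c1 \<le> c2"
    and eta_Theta: "\<forall>\<^sub>F T in sequentially.
                      c1 * sqrt (real K / real T) \<le> eta T \<and> eta T \<le> c2 * sqrt (real K / real T)"
  shows "\<exists>C T0. \<forall>T\<ge>T0. K dvd T \<longrightarrow>
           (\<forall>selX selA. valid_selectors m n S selX selA \<longrightarrow>
              (\<forall>k\<in>{1..K}.
                 \<bar>expected_proxy_regret m n K T c S g mu1 (eta T) selX selA P k\<bar>
                   \<le> C * sqrt (real T / real K)))"
proof -
  from eta_Theta obtain T1 where T1: "\<And>T. T \<ge> T1 \<Longrightarrow> c1 * sqrt (real K / real T) \<le> eta T \<and> eta T \<le> c2 * sqrt (real K / real T)"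
    by (auto simp: eventually_sequentially)
  define B where "B = (\<Sum>k''=1..K. \<Sum>i<m. (mu1 k'' i)^2 + (real K * L)^2)"
  have B0: "0 \<le> B" unfolding B_def by (intro sum_nonneg) auto
  define C where "C = B / c1 + real K * real m * c2 / 2"
  show ?thesis
  proof (intro exI[of _ C] exI[of _ "max T1 1"] allI impI ballI)
    fix T selX selA k
    assume T: "max T1 1 \<le> T" and dvd: "K dvd T" and valid: "valid_selectors m n S selX selA" and k: "k \<in> {1..K}"
    have Tpos: "0 < T" using T by auto
    have eb: "c1 * sqrt (real K / real T) \<le> eta T" "eta T \<le> c2 * sqrt (real K / real T)" using T1[of T] T by auto
    have Kpos: "0 < real K" using K_pos by simp
    define s where "s = sqrt (real T / real K)"
    have s: "0 < s" using Tpos Kpos unfolding s_def by simp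
    have sK: "sqrt (real K / real T) = 1 / s" unfolding s_def by (simp add: real_sqrt_divide)
    have lo: "c1 / s \<le> eta T" using eb(1) sK by simp
    have hi: "eta T \<le> c2 / s" using eb(2) sK by simp
    have c1s: "0 < c1 / s" using c1_pos s by simp
    have etapos: "0 < eta T" using lo c1s by linarith
    have gp: "\<forall>k\<in>{1..K}. \<forall>i<m. convex_on {0..1} (g k i) \<and> L-lipschitz_on {0..1} (g k i)"
      using g_props by blast
    interpret dgdP m n K T c S g L mu1 "eta T" selX selA P
      by unfold_locales (use K_pos dvd Tpos S_sub gp valid etapos P_supp in auto)
    have E: "0 \<le> expected_proxy_regret m n K T c S g mu1 (eta T) selX selA P k \<and>
         expected_proxy_regret m n K T c S g mu1 (eta T) selX selA P k \<le> B0 / eta T + real K * real m * (eta T * real (T div K) / 2)"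
      by (rule E_regret[OF k])
    have BB: "B0 = B" by (simp add: B0_def B_def)
    have Ns: "real (T div K) = s^2"
      using TK Tpos Kpos unfolding s_def by simp
    have t1: "B / eta T \<le> B / c1 * s"
    proof -
      have "B / eta T \<le> B / (c1 / s)" using B0 c1s lo mult_pos_pos[OF etapos c1s] by (intro divide_left_mono) (auto simp: mult.commute)
      also have "\<dots> = B / c1 * s" using s c1_pos by simp
      finally show ?thesis .
    qed
    have t2: "eta T * real (T div K) \<le> c2 * s"
    proof -
      have "eta T * real (T div K) \<le> c2 / s * real (T div K)" using hi by (intro mult_right_mono) auto
      also have "\<dots> = c2 * s" unfolding Ns using s by (simp add: power2_eq_square)
      finally show ?thesis .
    qed
    have t3: "real K * real m * (eta T * real (T div K) / 2) \<le> real K * real m * c2 / 2 * s"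
    proof -
      have "real K * real m * (eta T * real (T div K)) \<le> real K * real m * (c2 * s)"
        using t2 by (intro mult_left_mono) auto
      then show ?thesis by (simp add: algebra_simps)
    qed
    have "expected_proxy_regret m n K T c S g mu1 (eta T) selX selA P k \<le> C * s"
      using E BB t1 t3 unfolding C_def by (simp add: algebra_simps)
    then show "\<bar>expected_proxy_regret m n K T c S g mu1 (eta T) selX selA P k\<bar> \<le> C * sqrt (real T / real K)"
      using E unfolding s_def by simp
  qed
qed

end
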